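(* Consider an ergodic Jackson network process $\mathbf{X}$ (setting in the context) with stationary distribution $\xi(\mathbf{n})=\prod_{j=1}^{J}\prod_{k=1}^{n_j}\frac{\eta_j}{\mu_j(k)}C(j)^{-1}$. Let $\boldsymbol{\gamma}=(\gamma_j:j\in\overline{J})\in[0,1]^{\overline{J}}$, define $\boldsymbol{\alpha}=(\alpha_j:j\in\overline{J}_0)$ by $\alpha_0=1$, $\alpha_j=\gamma_j$ for $j\in\overline{J}$, and let $r^{(\boldsymbol{\alpha})}=(I-rI_{(1-\boldsymbol{\alpha})})^{-1}rI_{\boldsymbol{\alpha}}$ be the randomized-skipping modification of the extended routing matrix $r$. Let $\mathbf{X}^{(\boldsymbol{\gamma})}$ be the continuous-time Markov chain on $\mathbb{N}_0^{\overline{J}}$ whose positive transition rates are $q(\mathbf{n},\mathbf{n}+\mathbf{e}_i)=\lambda r^{(\boldsymbol{\alpha})}(0,i)$ for $i\in\overline{J}$, $q(\mathbf{n},\mathbf{n}-\mathbf{e}_j+\mathbf{e}_i)=1_{[n_j>0]}\gamma_j\mu_j(n_j)r^{(\boldsymbol{\alpha})}(j,i)$ for $i,j\in\overline{J}$, $i\ne j$, and $q(\mathbf{n},\mathbf{n}-\mathbf{e}_j)=1_{[n_j>0]}\gamma_j\mu_j(n_j)r^{(\boldsymbol{\alpha})}(j,0)$ for $j\in\overline{J}$. Let $B(\boldsymbol{\gamma})=\{j\in\overline{J}:\gamma_j=0\}$ and $W(\boldsymbol{\gamma})=\overline{J}\setminus B(\boldsymbol{\gamma})$. Then $\xi$ is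 a stationary distribution of $\mathbf{X}^{(\boldsymbol{\gamma})}$. If $B(\boldsymbol{\gamma})=\emptyset$, then $\mathbf{X}^{(\boldsymbol{\gamma})}$ is ergodic. If $B(\boldsymbol{\gamma})\neq\emptyset$, then $\mathbf{X}^{(\boldsymbol{\gamma})}$ is not irreducible on $\mathbb{N}_0^{\overline{J}}$, its state space splits into the infinitely many closed subspaces $\mathbb{N}_0^{W(\boldsymbol{\gamma})}\times\{(n_j:j\in B(\boldsymbol{\gamma}))\}$, $(n_j:j\in B(\boldsymbol{\gamma}))\in\mathbb{N}_0^{B(\boldsymbol{\gamma})}$, and for every probability distribution $\varphi$ on $\mathbb{N}_0^{B(\boldsymbol{\gamma})}$ the distribution \[ \xi^{(\boldsymbol{\gamma})}_\varphi(\mathbf{n})=\prod_{j\in W(\boldsymbol{\gamma})}\prod_{k=1}^{n_j}\frac{\eta_j}{\mu_j(k)}C(j)^{-1}\cdot\varphi(n_j:j\in B(\boldsymbol{\gamma})),\qquad \mathbf{n}\in\mathbb{N}_0^{\overline{J}}, \] is a stationary distribution of $\mathbf{X}^{(\boldsymbol{\gamma})}$.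
   Context: Jackson network setting: node set $\overline{J}=\{1,\dots,J\}$, extended node set $\overline{J}_0=\{0,1,\dots,J\}$ (0 = external source/sink). External Poisson arrivals at node $j$ with rates $\lambda_j\ge0$, $\lambda=\sum_j\lambda_j>0$; single servers with infinite waiting room, FCFS, service intensity $\mu_j(n_j)>0$ when $n_j>0$ customers are at node $j$. Extended routing matrix $r=(r(i,j):i,j\in\overline{J}_0)$ is stochastic and irreducible with $r(0,j)=\lambda_j/\lambda$, $r(0,0)=0$; $r(j,0)$ is the probability of leaving the network from $j$. $\eta=(\eta_j:j\in\overline{J}_0)$ is the extended traffic solution: $\eta_0=\lambda$ and $\eta_j=\sum_{i\in\overline{J}_0}\eta_i r(i,j)$ for all $j\in\overline{J}_0$. The Jackson network process $\mathbf{X}$ is the Markov chain on $\mathbb{N}_0^{\overline{J}}$ with rates $q(\mathbf{n},\mathbf{n}+\mathbf{e}_i)=\lambda r(0,i)$, $q(\mathbf{n},\mathbf{n}-\mathbf{e}_j+\mathbf{e}_i)=1_{[n_j>0]}\mu_j(n_j)r(j,i)$ ($i\neq j$), $q(\mathbf{n},\mathbf{n}-\mathbf{e}_j)=1_{[n_j>0]}\mu_j(n_j)r(j,0)$; it is assumed ergodic, and $C(j)=\sum_{n\ge0}\prod_{k=1}^n\eta_j/\mu_j(k)<\infty$ are the normalizing constants. $\mathbf{e}_j$ is the $j$-th unit vector. $I_{\boldsymbol{\alpha}}$, $I_{(1-\boldsymbol{\alpha})}$ are diagonal matrices indexed by $\overline{J}_0$ with entries $\alpha_j$, resp. $1-\alpha_j$;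 $r^{(\boldsymbol{\alpha})}$ is the transition matrix of randomized skipping (a proposed next state $j$ drawn from the current row of $r$ is accepted with probability $\alpha_j$; if rejected, a new proposal is drawn from row $j$ of $r$ without time passing, until acceptance). *)

theory Defs
  imports "HOL-Analysis.Analysis"
begin

text \<open>A CTMC is given by its state space S and its off-diagonal transition
rates q m n (m \<noteq> n). Rates outside S and on the diagonal are irrelevant.\<close>

definition out_rate :: "'s set \<Rightarrow> ('s \<Rightarrow> 's \<Rightarrow> real) \<Rightarrow> 's \<Rightarrow> real" where
  "out_rate S q m = (\<Sum>\<^sub>\<infinity> n\<in>S - {m}. q m n)"

text \<open>Stationary distribution: a probability on S satisfying the global balance
equations pi Q = 0.\<close>
definition stationary_dist :: "'s set \<Rightarrow> ('s \<Rightarrow> 's \<Rightarrow> real) \<Rightarrow> ('s \<Rightarrow> real) \<Rightarrow> bool" where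
  "stationary_dist S q p \<longleftrightarrow>
     (\<forall>n\<in>S. 0 \<le> p n) \<and> (p has_sum 1) S \<and>
     (\<forall>m\<in>S. (q m) summable_on (S - {m}) \<and>
            ((\<lambda>n. p n * q n m) has_sum (p m * out_rate S q m)) (S - {m}))"

definition irreducible_ctmc :: "'s set \<Rightarrow> ('s \<Rightarrow> 's \<Rightarrow> real) \<Rightarrow> bool" where
  "irreducible_ctmc S q \<longleftrightarrow>
     (\<forall>m\<in>S. \<forall>n\<in>S. (m, n) \<in> {(a, b). a \<in> S \<and> b \<in> S \<and> a \<noteq> b \<and> 0 < q a b}\<^sup>*)"

definition closed_subset :: "'s set \<Rightarrow> ('s \<Rightarrow> 's \<Rightarrow> real) \<Rightarrow> 's set \<Rightarrow> bool" where
  "closed_subset S q A \<longleftrightarrow> A \<subseteq> S \<and> (\<forall>m\<in>A. \<forall>n\<in>S - A. q m n = 0)"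

definition jump_prob :: "'s set \<Rightarrow> ('s \<Rightarrow> 's \<Rightarrow> real) \<Rightarrow> 's \<Rightarrow> 's \<Rightarrow> real" where
  "jump_prob S q m n = (if m = n then 0 else q m n / out_rate S q m)"

text \<open>Taboo probabilities of the jump chain Y started in i:
  taboo_prob S q i k j = P_i(Y_k = j, Y_1 \<noteq> i, ..., Y_k \<noteq> i).\<close>
primrec taboo_prob :: "'s set \<Rightarrow> ('s \<Rightarrow> 's \<Rightarrow> real) \<Rightarrow> 's \<Rightarrow> nat \<Rightarrow> 's \<Rightarrow> real" where
  "taboo_prob S q i 0 j = (if j = i then 1 else 0)"
| "taboo_prob S q i (Suc k) j =
     (if j = i then 0 else (\<Sum>\<^sub>\<infinity> l\<in>S. taboo_prob S q i k l * jump_prob S q l j))"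

text \<open>State i is positive recurrent: the jump chain returns to i almost surely
(the probabilities of first return at step k+1 sum to 1), and the expected
return time of the CTMC, E_i[sum over the jumps before return of the holding times]
= sum_k sum_j P_i(Y_k = j, k < return time) / q(j), is finite.\<close>
definition pos_recurrent_state :: "'s set \<Rightarrow> ('s \<Rightarrow> 's \<Rightarrow> real) \<Rightarrow> 's \<Rightarrow> bool" where
  "pos_recurrent_state S q i \<longleftrightarrow>
     ((\<lambda>k. \<Sum>\<^sub>\<infinity> l\<in>S. taboo_prob S q i k l * jump_prob S q l i) has_sum 1) UNIV \<and>
     (\<lambda>(k, j). taboo_prob S q i k j / out_rate S q j) summable_on (UNIV \<times> S)"

definition ergodic_ctmc :: "'s set \<Rightarrow> ('s \<Rightarrow> 's \<Rightarrow> real) \<Rightarrow> bool" where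
  "ergodic_ctmc S q \<longleftrightarrow> irreducible_ctmc S q \<and> (\<forall>i\<in>S. pos_recurrent_state S q i)"

definition net_states :: "nat \<Rightarrow> (nat \<Rightarrow> nat) set" where
  "net_states J = {n. \<forall>j. j \<notin> {1..J} \<longrightarrow> n j = 0}"

definition net_rates ::
  "nat \<Rightarrow> (nat \<Rightarrow> real) \<Rightarrow> (nat \<Rightarrow> nat \<Rightarrow> real) \<Rightarrow> (nat \<Rightarrow> nat \<Rightarrow> real)
     \<Rightarrow> (nat \<Rightarrow> nat) \<Rightarrow> (nat \<Rightarrow> nat) \<Rightarrow> real" where
  "net_rates J a s p n n' =
     (\<Sum>i\<in>{1..J}. if n' = n(i := n i + 1) then a i else 0)
   + (\<Sum>j\<in>{1..J}. \<Sum>i\<in>{1..J} - {j}.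
        if 0 < n j \<and> n' = n(j := n j - 1, i := n i + 1) then s j (n j) * p j i else 0)
   + (\<Sum>j\<in>{1..J}. if 0 < n j \<and> n' = n(j := n j - 1) then s j (n j) * p j 0 else 0)"

text \<open>Randomized skipping matrix r^(alpha) = (I - r I_(1-alpha))^{-1} r I_alpha,
as matrices indexed by {0..J}: the unique X (supported on {0..J}^2) with
(I - r I_(1-alpha)) X = r I_alpha.\<close>
definition skip_matrix :: "nat \<Rightarrow> (nat \<Rightarrow> nat \<Rightarrow> real) \<Rightarrow> (nat \<Rightarrow> real) \<Rightarrow> nat \<Rightarrow> nat \<Rightarrow> real" where
  "skip_matrix J r \<alpha> = (THE X.
      (\<forall>i j. (J < i \<or> J < j) \<longrightarrow> X i j = 0) \<and>
      (\<forall>i\<le>J. \<forall>j\<le>J. X i j - (\<Sum>k\<le>J. r i k * (1 - \<alpha> k) * X k j) = r i j * \<alpha> j))"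

definition norm_const :: "(nat \<Rightarrow> real) \<Rightarrow> (nat \<Rightarrow> nat \<Rightarrow> real) \<Rightarrow> nat \<Rightarrow> real" where
  "norm_const \<eta> \<mu> j = (\<Sum>m. \<Prod>k\<in>{1..m}. \<eta> j / \<mu> j k)"

definition node_factor :: "(nat \<Rightarrow> real) \<Rightarrow> (nat \<Rightarrow> nat \<Rightarrow> real) \<Rightarrow> nat \<Rightarrow> nat \<Rightarrow> real" where
  "node_factor \<eta> \<mu> j m = (\<Prod>k\<in>{1..m}. \<eta> j / \<mu> j k) / norm_const \<eta> \<mu> j"

end

theory Submission
  imports Defs
begin

lemma has_sum_sum_fin:
  fixes f :: "'i \<Rightarrow> 'a \<Rightarrow> real"
  assumes "finite I" "\<And>t. t\<in>I \<Longrightarrow> (f t has_sum s t) A"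
  shows "((\<lambda>x. \<Sum>t\<in>I. f t x) has_sum (\<Sum>t\<in>I. s t)) A"
  using assms
proof (induction I rule: finite_induct)
  case empty then show ?case by simp
next
  case (insert t I)
  have "((\<lambda>x. f t x + (\<Sum>t\<in>I. f t x)) has_sum (s t + (\<Sum>t\<in>I. s t))) A"
    by (intro has_sum_add) (use insert in auto)
  then show ?case using insert by simp
qed

lemma has_sum_point:
  "((\<lambda>x. if x = y then c else 0) has_sum (if y \<in> A then c else (0::real))) A"
  by (rule has_sum_finite_neutralI[where B="A \<inter> {y}"]) auto

lemma has_sum_point':
  "y \<in> A \<Longrightarrow> ((\<lambda>x. if x = y then c else 0) has_sum (c::real)) A"
  using has_sum_point[of y c A] by simp

lemma net_states_upd:
  "n \<in> net_states J \<Longrightarrow> i \<in> {1..J} \<Longrightarrow> n(i := k) \<in> net_states J"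
  by (auto simp: net_states_def)

lemma ifc: "(if P \<and> Q then c else (0::real)) = (if Q then (if P then c else 0) else 0)" by auto

definition OUT where
  "OUT J a s p m = (\<Sum>i\<in>{1..J}. a i) + (\<Sum>j\<in>{1..J}. \<Sum>i\<in>{1..J}-{j}. if 0 < m j then s j (m j) * p j i else 0)
     + (\<Sum>j\<in>{1..J}. if 0 < m j then s j (m j) * p j 0 else (0::real))"

lemma out_has_sum:
  assumes m: "m \<in> net_states J"
  shows "(net_rates J a s p m has_sum OUT J a s p m) (net_states J - {m})"
proof -
  let ?S = "net_states J - {m}"
  have e: "net_rates J a s p m = (\<lambda>n'.
     (\<Sum>i\<in>{1..J}. if n' = m(i := m i + 1) then a i else 0)
   + (\<Sum>j\<in>{1..J}. \<Sum>i\<in>{1..J} - {j}.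
        if n' = m(j := m j - 1, i := m i + 1) then (if 0 < m j then s j (m j) * p j i else 0) else 0)
   + (\<Sum>j\<in>{1..J}. if n' = m(j := m j - 1) then (if 0 < m j then s j (m j) * p j 0 else 0) else 0))"
    unfolding net_rates_def ifc by (rule refl)
  have 1: "((\<lambda>n'. \<Sum>i\<in>{1..J}. if n' = m(i := m i + 1) then a i else 0) has_sum (\<Sum>i\<in>{1..J}. a i)) ?S"
  proof (rule has_sum_sum_fin, simp)
    fix i assume i: "i \<in> {1..J}"
    have "m(i := m i + 1) \<in> ?S" using m i by (auto simp: net_states_upd fun_eq_iff dest: fun_cong[where x=i])
    then show "((\<lambda>n'. if n' = m(i := m i + 1) then a i else 0) has_sum a i) ?S" by (rule has_sum_point')
  qed
  have 2: "((\<lambda>n'. \<Sum>j\<in>{1..J}. \<Sum>i\<in>{1..J} - {j}.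
        if n' = m(j := m j - 1, i := m i + 1) then (if 0 < m j then s j (m j) * p j i else 0) else 0)
      has_sum (\<Sum>j\<in>{1..J}. \<Sum>i\<in>{1..J}-{j}. if 0 < m j then s j (m j) * p j i else 0)) ?S"
  proof (rule has_sum_sum_fin, simp, rule has_sum_sum_fin, simp)
    fix j i assume j: "j \<in> {1..J}" and i: "i \<in> {1..J} - {j}"
    show "((\<lambda>n'. if n' = m(j := m j - 1, i := m i + 1) then (if 0 < m j then s j (m j) * p j i else 0) else 0)
       has_sum (if 0 < m j then s j (m j) * p j i else 0)) ?S"
    proof (cases "0 < m j")
      case True
      have "m(j := m j - 1, i := m i + 1) \<in> ?S" using m i j True
        by (auto simp: net_states_upd fun_eq_iff dest: fun_cong[where x=i])
      then show ?thesis using True by (simp add: has_sum_point')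
    qed simp
  qed
  have 3: "((\<lambda>n'. \<Sum>j\<in>{1..J}. if n' = m(j := m j - 1) then (if 0 < m j then s j (m j) * p j 0 else 0) else 0)
      has_sum (\<Sum>j\<in>{1..J}. if 0 < m j then s j (m j) * p j 0 else 0)) ?S"
  proof (rule has_sum_sum_fin, simp)
    fix j assume j: "j \<in> {1..J}"
    show "((\<lambda>n'. if n' = m(j := m j - 1) then (if 0 < m j then s j (m j) * p j 0 else 0) else 0)
       has_sum (if 0 < m j then s j (m j) * p j 0 else 0)) ?S"
    proof (cases "0 < m j")
      case True
      have "m(j := m j - 1) \<in> ?S" using m j True
        by (auto simp: net_states_upd fun_eq_iff dest: fun_cong[where x=j])
      then show ?thesis using True by (simp add: has_sum_point')
    qed simp
  qed
  show ?thesis unfolding e OUT_def by (intro has_sum_add 1 2 3)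
qed

definition IN where
  "IN J a s p \<pi> m = (\<Sum>i\<in>{1..J}. if 0 < m i then \<pi> (m(i := m i - 1)) * a i else 0)
   + (\<Sum>j\<in>{1..J}. \<Sum>i\<in>{1..J}-{j}. if 0 < m i then \<pi> (m(i := m i - 1, j := m j + 1)) * (s j (m j + 1) * p j i) else 0)
   + (\<Sum>j\<in>{1..J}. \<pi> (m(j := m j + 1)) * (s j (m j + 1) * p j 0) :: real)"

lemma eq_upd1: "(m = n(i := n i + 1)) \<longleftrightarrow> (0 < m i \<and> n = (m(i := m i - 1)::nat\<Rightarrow>nat))"
proof
  assume h: "m = n(i := n i + 1)"
  then show "0 < m i \<and> n = m(i := m i - 1)" by auto
next
  assume h: "0 < m i \<and> n = m(i := m i - 1)"
  then show "m = n(i := n i + 1)" by (auto simp: fun_eq_iff)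
qed
lemma eq_upd2: "i \<noteq> j \<Longrightarrow> (0 < n j \<and> m = n(j := n j - 1, i := n i + 1)) \<longleftrightarrow> (0 < m i \<and> n = (m(i := m i - 1, j := m j + 1)::nat\<Rightarrow>nat))"
proof
  assume ij: "i \<noteq> j" and h: "0 < n j \<and> m = n(j := n j - 1, i := n i + 1)"
  then show "0 < m i \<and> n = m(i := m i - 1, j := m j + 1)" by (auto simp: fun_eq_iff)
next
  assume ij: "i \<noteq> j" and h: "0 < m i \<and> n = m(i := m i - 1, j := m j + 1)"
  then show "0 < n j \<and> m = n(j := n j - 1, i := n i + 1)" by (auto simp: fun_eq_iff)
qed
lemma eq_upd3: "(0 < n j \<and> m = n(j := n j - 1)) \<longleftrightarrow> (n = (m(j := m j + 1)::nat\<Rightarrow>nat))"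
proof
  assume h: "0 < n j \<and> m = n(j := n j - 1)"
  then show "n = m(j := m j + 1)" by (auto simp: fun_eq_iff)
next
  assume h: "n = m(j := m j + 1)"
  then show "0 < n j \<and> m = n(j := n j - 1)" by auto
qed

lemma a1: fixes m n :: "nat \<Rightarrow> nat" shows "\<pi> n * (if m = n(i := n i + 1) then a i else 0) =
       (if n = m(i := m i - 1) then (if 0 < m i then \<pi> (m(i := m i - 1)) * a i else 0) else (0::real))"
      using eq_upd1[of m n i] by auto
lemma a2: fixes m n :: "nat \<Rightarrow> nat" shows "i \<in> {1..J} - {j} \<Longrightarrow> \<pi> n * (if 0 < n j \<and> m = n(j := n j - 1, i := n i + 1) then s j (n j) * p j i else 0) =
       (if n = m(i := m i - 1, j := m j + 1) then (if 0 < m i then \<pi> (m(i := m i - 1, j := m j + 1)) * (s j (m j + 1) * p j i) else 0) else (0::real))"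
    proof -
      assume that: "i \<in> {1..J} - {j}"
      have ij: "i \<noteq> j" using that by auto
      show ?thesis
      proof (cases "0 < m i \<and> n = m(i := m i - 1, j := m j + 1)")
        case True
        then have "0 < n j \<and> m = n(j := n j - 1, i := n i + 1)" using eq_upd2[OF ij] by blast
        moreover have "n j = m j + 1" using True ij by simp
        ultimately show ?thesis using True by simp
      next
        case False
        then have "\<not> (0 < n j \<and> m = n(j := n j - 1, i := n i + 1))" using eq_upd2[OF ij] by blast
        then show ?thesis using False by auto
      qed
    qed
lemma a3: fixes m n :: "nat \<Rightarrow> nat" shows "\<pi> n * (if 0 < n j \<and> m = n(j := n j - 1) then s j (n j) * p j 0 else 0) =
       (if n = m(j := m j + 1) then \<pi> (m(j := m j + 1)) * (s j (m j + 1) * p j 0) else (0::real))"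
      using eq_upd3[of n j m] by auto

lemma in_has_sum:
  assumes m: "m \<in> net_states J"
  shows "((\<lambda>n. \<pi> n * net_rates J a s p n m) has_sum IN J a s p \<pi> m) (net_states J - {m})"
proof -
  let ?S = "net_states J - {m}"
  have e: "(\<lambda>n. \<pi> n * net_rates J a s p n m) = (\<lambda>n.
     (\<Sum>i\<in>{1..J}. if n = m(i := m i - 1) then (if 0 < m i then \<pi> (m(i := m i - 1)) * a i else 0) else 0)
   + (\<Sum>j\<in>{1..J}. \<Sum>i\<in>{1..J} - {j}.
        if n = m(i := m i - 1, j := m j + 1) then (if 0 < m i then \<pi> (m(i := m i - 1, j := m j + 1)) * (s j (m j + 1) * p j i) else 0) else 0)
   + (\<Sum>j\<in>{1..J}. if n = m(j := m j + 1) then \<pi> (m(j := m j + 1)) * (s j (m j + 1) * p j 0) else 0))"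
    unfolding net_rates_def distrib_left sum_distrib_left
    by (rule ext, intro arg_cong2[where f=plus] sum.cong refl a1 a3 a2, assumption)
  have 1: "((\<lambda>n. \<Sum>i\<in>{1..J}. if n = m(i := m i - 1) then (if 0 < m i then \<pi> (m(i := m i - 1)) * a i else 0) else 0)
      has_sum (\<Sum>i\<in>{1..J}. if 0 < m i then \<pi> (m(i := m i - 1)) * a i else 0)) ?S"
  proof (rule has_sum_sum_fin, simp)
    fix i assume i: "i \<in> {1..J}"
    show "((\<lambda>n. if n = m(i := m i - 1) then (if 0 < m i then \<pi> (m(i := m i - 1)) * a i else 0) else 0)
       has_sum (if 0 < m i then \<pi> (m(i := m i - 1)) * a i else 0)) ?S"
    proof (cases "0 < m i")
      case True
      have "m(i := m i - 1) \<in> ?S" using m i True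
        by (auto simp: net_states_upd fun_eq_iff dest: fun_cong[where x=i])
      then show ?thesis using True by (simp only: True if_True) (rule has_sum_point')
    qed simp
  qed
  have 2: "((\<lambda>n. \<Sum>j\<in>{1..J}. \<Sum>i\<in>{1..J} - {j}.
        if n = m(i := m i - 1, j := m j + 1) then (if 0 < m i then \<pi> (m(i := m i - 1, j := m j + 1)) * (s j (m j + 1) * p j i) else 0) else 0)
      has_sum (\<Sum>j\<in>{1..J}. \<Sum>i\<in>{1..J}-{j}. if 0 < m i then \<pi> (m(i := m i - 1, j := m j + 1)) * (s j (m j + 1) * p j i) else 0)) ?S"
  proof (rule has_sum_sum_fin, simp, rule has_sum_sum_fin, simp)
    fix j i assume j: "j \<in> {1..J}" and i: "i \<in> {1..J} - {j}"
    show "((\<lambda>n. if n = m(i := m i - 1, j := m j + 1) then (if 0 < m i then \<pi> (m(i := m i - 1, j := m j + 1)) * (s j (m j + 1) * p j i) else 0) else 0)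
       has_sum (if 0 < m i then \<pi> (m(i := m i - 1, j := m j + 1)) * (s j (m j + 1) * p j i) else 0)) ?S"
    proof (cases "0 < m i")
      case True
      have "m(i := m i - 1, j := m j + 1) \<in> ?S" using m i j True
        by (auto simp: net_states_upd fun_eq_iff dest: fun_cong[where x=j])
      then show ?thesis using True by (simp only: True if_True) (rule has_sum_point')
    qed simp
  qed
  have 3: "((\<lambda>n. \<Sum>j\<in>{1..J}. if n = m(j := m j + 1) then \<pi> (m(j := m j + 1)) * (s j (m j + 1) * p j 0) else 0)
      has_sum (\<Sum>j\<in>{1..J}. \<pi> (m(j := m j + 1)) * (s j (m j + 1) * p j 0))) ?S"
  proof (rule has_sum_sum_fin, simp)
    fix j assume j: "j \<in> {1..J}"
    have "m(j := m j + 1) \<in> ?S" using m j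
      by (auto simp: net_states_upd fun_eq_iff dest: fun_cong[where x=j])
    then show "((\<lambda>n. if n = m(j := m j + 1) then \<pi> (m(j := m j + 1)) * (s j (m j + 1) * p j 0) else 0)
       has_sum (\<pi> (m(j := m j + 1)) * (s j (m j + 1) * p j 0))) ?S" by (rule has_sum_point')
  qed
  show ?thesis unfolding e IN_def by (intro has_sum_add 1 2 3)
qed

lemma sum_if_eq0:
  fixes f :: "nat \<Rightarrow> real"
  assumes "finite A" "j \<in> A"
  shows "(\<Sum>i\<in>A. if i = j then 0 else f i) = (\<Sum>i\<in>A-{j}. f i)"
  by (subst sum.remove[OF assms]) (auto intro: sum.cong)

lemma sum_remove_swap:
  fixes f :: "nat \<Rightarrow> nat \<Rightarrow> real"
  shows "(\<Sum>j\<in>{1..J}. \<Sum>i\<in>{1..J}-{j}. f i j) = (\<Sum>i\<in>{1..J}. \<Sum>j\<in>{1..J}-{i}. f i j)"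
proof -
  have "(\<Sum>j\<in>{1..J}. \<Sum>i\<in>{1..J}-{j}. f i j) = (\<Sum>j\<in>{1..J}. \<Sum>i\<in>{1..J}. if i = j then 0 else f i j)"
  proof (rule sum.cong[OF refl])
    fix j assume "j \<in> {1..J}"
    then show "(\<Sum>i\<in>{1..J}-{j}. f i j) = (\<Sum>i\<in>{1..J}. if i = j then 0 else f i j)"
      using sum_if_eq0[of "{1..J}" j "\<lambda>i. f i j"] by simp
  qed
  also have "\<dots> = (\<Sum>i\<in>{1..J}. \<Sum>j\<in>{1..J}. if i = j then 0 else f i j)" by (rule sum.swap)
  also have "\<dots> = (\<Sum>i\<in>{1..J}. \<Sum>j\<in>{1..J}-{i}. f i j)"
  proof (rule sum.cong[OF refl])
    fix i assume "i \<in> {1..J}"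
    then show "(\<Sum>j\<in>{1..J}. if i = j then 0 else f i j) = (\<Sum>j\<in>{1..J}-{i}. f i j)"
      using sum_if_eq0[of "{1..J}" i "\<lambda>j. f i j"] by (simp add: eq_commute[of i])
  qed
  finally show ?thesis .
qed

lemma sum_atMost_split:
  fixes f :: "nat \<Rightarrow> real"
  assumes "j \<in> {1..J}"
  shows "(\<Sum>i\<le>J. f i) = f 0 + f j + (\<Sum>i\<in>{1..J}-{j}. f i)"
proof -
  have "{..J} = insert 0 {1..J}" by auto
  then have "(\<Sum>i\<le>J. f i) = f 0 + (\<Sum>i\<in>{1..J}. f i)" by simp
  also have "(\<Sum>i\<in>{1..J}. f i) = f j + (\<Sum>i\<in>{1..J}-{j}. f i)"
    using assms by (simp add: sum.remove)
  finally show ?thesis by simp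
qed

lemma net_balance:
  fixes \<pi> :: "(nat \<Rightarrow> nat) \<Rightarrow> real"
  assumes m: "m \<in> net_states J"
    and R: "\<And>n j. n \<in> net_states J \<Longrightarrow> j \<in> {1..J} \<Longrightarrow> 0 < n j \<Longrightarrow> \<pi> n * s j (n j) = \<pi> (n(j := n j - 1)) * v j"
    and T: "\<And>i. i \<in> {1..J} \<Longrightarrow> v i = a i + (\<Sum>j\<in>{1..J}. v j * p j i)"
    and RS: "\<And>j. j \<in> {1..J} \<Longrightarrow> (\<Sum>i\<le>J. p j i) = 1"
  shows "IN J a s p \<pi> m = \<pi> m * OUT J a s p m"
proof -
  have flow: "(\<Sum>j\<in>{1..J}. v j * p j 0) = (\<Sum>i\<in>{1..J}. a i)"
  proof -
    have r1: "(\<Sum>i\<in>{1..J}. p j i) = 1 - p j 0" if "j \<in> {1..J}" for j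
    proof -
      have "{..J} = insert 0 {1..J}" by auto
      then show ?thesis using RS[OF that] by simp
    qed
    have "(\<Sum>i\<in>{1..J}. v i) = (\<Sum>i\<in>{1..J}. a i) + (\<Sum>i\<in>{1..J}. \<Sum>j\<in>{1..J}. v j * p j i)"
      by (simp add: T sum.distrib)
    also have "(\<Sum>i\<in>{1..J}. \<Sum>j\<in>{1..J}. v j * p j i) = (\<Sum>j\<in>{1..J}. v j * (\<Sum>i\<in>{1..J}. p j i))"
      by (subst sum.swap) (simp add: sum_distrib_left)
    also have "\<dots> = (\<Sum>j\<in>{1..J}. v j - v j * p j 0)"
    proof (intro sum.cong refl)
      fix j assume j: "j \<in> {1..J}"
      show "v j * (\<Sum>i\<in>{1..J}. p j i) = v j - v j * p j 0" unfolding r1[OF j] by (simp add: algebra_simps)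
    qed
    finally show ?thesis by (simp add: sum_subtractf)
  qed
  have in2: "(\<Sum>j\<in>{1..J}. \<Sum>i\<in>{1..J}-{j}. if 0 < m i then \<pi> (m(i := m i - 1, j := m j + 1)) * (s j (m j + 1) * p j i) else 0)
     = (\<Sum>i\<in>{1..J}. \<Sum>j\<in>{1..J}-{i}. if 0 < m i then \<pi> (m(i := m i - 1)) * (v j * p j i) else 0)"
  proof -
    have "(\<Sum>j\<in>{1..J}. \<Sum>i\<in>{1..J}-{j}. if 0 < m i then \<pi> (m(i := m i - 1, j := m j + 1)) * (s j (m j + 1) * p j i) else 0)
      = (\<Sum>j\<in>{1..J}. \<Sum>i\<in>{1..J}-{j}. if 0 < m i then \<pi> (m(i := m i - 1)) * (v j * p j i) else 0)"
    proof (intro sum.cong refl)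
      fix j i assume j: "j \<in> {1..J}" and i: "i \<in> {1..J} - {j}"
      let ?n = "m(i := m i - 1, j := m j + 1)"
      have n: "?n \<in> net_states J" using m i j by (simp add: net_states_upd)
      have "?n(j := ?n j - 1) = m(i := m i - 1)" using i by (auto simp: fun_eq_iff)
      then have "\<pi> ?n * s j (?n j) = \<pi> (m(i := m i - 1)) * v j" using R[OF n j] by simp
      then show "(if 0 < m i then \<pi> ?n * (s j (m j + 1) * p j i) else 0) =
            (if 0 < m i then \<pi> (m(i := m i - 1)) * (v j * p j i) else 0)"
        by (simp add: mult.assoc[symmetric])
    qed
    also have "\<dots> = (\<Sum>i\<in>{1..J}. \<Sum>j\<in>{1..J}-{i}. if 0 < m i then \<pi> (m(i := m i - 1)) * (v j * p j i) else 0)"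
      by (rule sum_remove_swap)
    finally show ?thesis .
  qed
  have in3: "(\<Sum>j\<in>{1..J}. \<pi> (m(j := m j + 1)) * (s j (m j + 1) * p j 0)) = \<pi> m * (\<Sum>j\<in>{1..J}. v j * p j 0)"
    unfolding sum_distrib_left
  proof (intro sum.cong refl)
    fix j assume j: "j \<in> {1..J}"
    let ?n = "m(j := m j + 1)"
    have n: "?n \<in> net_states J" using m j by (simp add: net_states_upd)
    have "\<pi> ?n * s j (?n j) = \<pi> m * v j" using R[OF n j] by simp
    then show "\<pi> ?n * (s j (m j + 1) * p j 0) = \<pi> m * (v j * p j 0)" by (simp add: mult.assoc[symmetric])
  qed
  have in12: "(\<Sum>i\<in>{1..J}. if 0 < m i then \<pi> (m(i := m i - 1)) * a i else 0)
     + (\<Sum>i\<in>{1..J}. \<Sum>j\<in>{1..J}-{i}. if 0 < m i then \<pi> (m(i := m i - 1)) * (v j * p j i) else 0)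
     = (\<Sum>i\<in>{1..J}. if 0 < m i then \<pi> m * (s i (m i) * (1 - p i i)) else 0)"
    unfolding sum.distrib[symmetric]
  proof (intro sum.cong refl)
    fix i assume i: "i \<in> {1..J}"
    show "(if 0 < m i then \<pi> (m(i := m i - 1)) * a i else 0) +
        (\<Sum>j\<in>{1..J}-{i}. if 0 < m i then \<pi> (m(i := m i - 1)) * (v j * p j i) else 0) =
        (if 0 < m i then \<pi> m * (s i (m i) * (1 - p i i)) else 0)"
    proof (cases "0 < m i")
      case True
      have "a i + (\<Sum>j\<in>{1..J}-{i}. v j * p j i) = v i - v i * p i i"
        using T[OF i] i by (simp add: sum.remove)
      moreover have "\<pi> (m(i := m i - 1)) * v i = \<pi> m * s i (m i)" using R[OF m i True] by simp
      ultimately have "\<pi> (m(i := m i - 1)) * a i + (\<Sum>j\<in>{1..J}-{i}. \<pi> (m(i := m i - 1)) * (v j * p j i))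
          = \<pi> m * (s i (m i) * (1 - p i i))"
        unfolding sum_distrib_left[symmetric] distrib_left[symmetric]
        by (metis (no_types, lifting) mult.assoc right_diff_distrib' mult.right_neutral)
      then show ?thesis using True by simp
    qed simp
  qed
  have out: "OUT J a s p m = (\<Sum>i\<in>{1..J}. a i) + (\<Sum>i\<in>{1..J}. if 0 < m i then s i (m i) * (1 - p i i) else 0)"
  proof -
    have "(\<Sum>j\<in>{1..J}. \<Sum>i\<in>{1..J}-{j}. if 0 < m j then s j (m j) * p j i else 0) + (\<Sum>j\<in>{1..J}. if 0 < m j then s j (m j) * p j 0 else 0)
      = (\<Sum>j\<in>{1..J}. if 0 < m j then s j (m j) * (1 - p j j) else 0)"
      unfolding sum.distrib[symmetric]
    proof (intro sum.cong refl)
      fix j assume j: "j \<in> {1..J}"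
      have "(\<Sum>i\<in>{1..J}-{j}. p j i) + p j 0 = 1 - p j j"
        using RS[OF j] sum_atMost_split[OF j, of "p j"] by simp
      then show "(\<Sum>i\<in>{1..J}-{j}. if 0 < m j then s j (m j) * p j i else 0) + (if 0 < m j then s j (m j) * p j 0 else 0)
        = (if 0 < m j then s j (m j) * (1 - p j j) else 0)"
        by (auto simp: sum_distrib_left[symmetric] distrib_left[symmetric])
    qed
    then show ?thesis unfolding OUT_def by simp
  qed
  have fin: "(\<Sum>i\<in>{1..J}. if 0 < m i then \<pi> m * (s i (m i) * (1 - p i i)) else 0)
     = \<pi> m * (\<Sum>i\<in>{1..J}. if 0 < m i then s i (m i) * (1 - p i i) else 0)"
    unfolding sum_distrib_left by (intro sum.cong refl) simp
  show ?thesis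
    unfolding IN_def in2 in3 flow in12 out fin by (simp add: distrib_left)
qed

lemma out_rate_net:
  assumes "m \<in> net_states J"
  shows "out_rate (net_states J) (net_rates J a s p) m = OUT J a s p m"
  using out_has_sum[OF assms] unfolding out_rate_def has_sum_iff by simp

lemma net_stationary:
  fixes \<pi> :: "(nat \<Rightarrow> nat) \<Rightarrow> real"
  assumes nonneg: "\<And>n. n \<in> net_states J \<Longrightarrow> 0 \<le> \<pi> n"
    and sum1: "(\<pi> has_sum 1) (net_states J)"
    and R: "\<And>n j. n \<in> net_states J \<Longrightarrow> j \<in> {1..J} \<Longrightarrow> 0 < n j \<Longrightarrow> \<pi> n * s j (n j) = \<pi> (n(j := n j - 1)) * v j"
    and T: "\<And>i. i \<in> {1..J} \<Longrightarrow> v i = a i + (\<Sum>j\<in>{1..J}. v j * p j i)"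
    and RS: "\<And>j. j \<in> {1..J} \<Longrightarrow> (\<Sum>i\<le>J. p j i) = 1"
  shows "stationary_dist (net_states J) (net_rates J a s p) \<pi>"
  unfolding stationary_dist_def
proof (intro conjI ballI)
  fix m assume m: "m \<in> net_states J"
  show "net_rates J a s p m summable_on net_states J - {m}"
    using out_has_sum[OF m] by (rule has_sum_imp_summable)
  show "((\<lambda>n. \<pi> n * net_rates J a s p n m) has_sum \<pi> m * out_rate (net_states J) (net_rates J a s p) m) (net_states J - {m})"
    unfolding out_rate_net[OF m] using in_has_sum[OF m, of \<pi> a s p] net_balance[OF m R T RS] by simp
qed (use assms in auto)

lemma prod_has_sum:
  fixes f :: "nat \<Rightarrow> nat \<Rightarrow> real" and \<phi> :: "(nat \<Rightarrow> nat) \<Rightarrow> real"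
  assumes "finite W" "W \<inter> B = {}"
    and f1: "\<And>j. j \<in> W \<Longrightarrow> (f j has_sum 1) UNIV"
    and f0: "\<And>j k. j \<in> W \<Longrightarrow> 0 \<le> f j k"
    and phi: "(\<phi> has_sum c) {b. \<forall>j. j \<notin> B \<longrightarrow> b j = 0}"
    and phi0: "\<And>b. b \<in> {b. \<forall>j. j \<notin> B \<longrightarrow> b j = 0} \<Longrightarrow> 0 \<le> \<phi> b"
  shows "((\<lambda>n. (\<Prod>j\<in>W. f j (n j)) * \<phi> (\<lambda>j. if j \<in> B then n j else 0)) has_sum c)
           {n. \<forall>j. j \<notin> W \<union> B \<longrightarrow> n j = 0}"
  using assms(1,2) f1 f0
proof (induction W rule: finite_induct)
  case empty
  show ?case unfolding Un_empty_left
  proof (rule has_sum_cong[THEN iffD2, OF _ phi])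
    fix n :: "nat \<Rightarrow> nat" assume "n \<in> {n. \<forall>j. j \<notin> B \<longrightarrow> n j = 0}"
    then have "(\<lambda>j. if j \<in> B then n j else 0) = n" by (auto simp: fun_eq_iff)
    then show "(\<Prod>j\<in>{}. f j (n j)) * \<phi> (\<lambda>j. if j \<in> B then n j else 0) = \<phi> n" by simp
  qed
next
  case (insert w W)
  let ?F = "\<lambda>n. (\<Prod>j\<in>W. f j (n j)) * \<phi> (\<lambda>j. if j \<in> B then n j else 0)"
  let ?So = "{n::nat\<Rightarrow>nat. \<forall>j. j \<notin> W \<union> B \<longrightarrow> n j = 0}"
  let ?Sn = "{n::nat\<Rightarrow>nat. \<forall>j. j \<notin> insert w W \<union> B \<longrightarrow> n j = 0}"
  have IH: "(?F has_sum c) ?So" using insert by auto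
  have wB: "w \<notin> B" using insert by auto
  have F0: "0 \<le> ?F n" for n
    using insert(6) phi0 by (intro mult_nonneg_nonneg prod_nonneg) auto
  have fw1: "(f w has_sum 1) UNIV" and fw0: "\<And>k. 0 \<le> f w k" using insert by auto
  have sig: "((\<lambda>(k, n). f w k * ?F n) has_sum c) (UNIV \<times> ?So)"
  proof (rule has_sum_SigmaI[where g="\<lambda>k. f w k * c"])
    show "((\<lambda>n. case (k, n) of (k, n) \<Rightarrow> f w k * ?F n) has_sum f w k * c) ?So" for k
      using has_sum_cmult_right[OF IH, of "f w k"] by simp
    show "((\<lambda>k. f w k * c) has_sum c) UNIV"
      using has_sum_cmult_left[OF fw1, of c] by simp
    show "(\<lambda>(k, n). f w k * ?F n) summable_on UNIV \<times> ?So"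
    proof (rule summable_on_SigmaI[where g="\<lambda>k. f w k * c"])
      show "((\<lambda>n. case (k, n) of (k, n) \<Rightarrow> f w k * ?F n) has_sum f w k * c) ?So" for k
        using has_sum_cmult_right[OF IH, of "f w k"] by simp
      show "(\<lambda>k. f w k * c) summable_on UNIV"
        using has_sum_cmult_left[OF fw1, of c] by (rule has_sum_imp_summable)
      show "0 \<le> (case (k, n) of (k, n) \<Rightarrow> f w k * ?F n)" for k n
        using fw0 F0 by simp
    qed
  qed
  show ?case
  proof (rule has_sum_reindex_bij_witness[where j="\<lambda>n. (n w, n(w := 0))" and i="\<lambda>(k, n). n(w := k)", THEN iffD2, OF _ _ _ _ _ refl sig])
    fix n :: "nat \<Rightarrow> nat" assume n: "n \<in> ?Sn"
    show "(case (n w, n(w := 0)) of (k, n) \<Rightarrow> n(w := k)) = n" by simp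
    show "(n w, n(w := 0)) \<in> UNIV \<times> ?So" using n by auto
    have "(\<Prod>j\<in>insert w W. f j (n j)) = f w (n w) * (\<Prod>j\<in>W. f j ((n(w := 0)) j))"
    proof -
      have "(\<Prod>j\<in>W. f j ((n(w := 0)) j)) = (\<Prod>j\<in>W. f j (n j))"
        using insert(2) by (intro prod.cong refl) auto
      then show ?thesis using insert(1,2) by simp
    qed
    moreover have "(\<lambda>j. if j \<in> B then (n(w := 0)) j else 0) = (\<lambda>j. if j \<in> B then n j else 0)"
      using wB by (auto simp: fun_eq_iff)
    ultimately show "(case (n w, n(w := 0)) of (k, n) \<Rightarrow> f w k * ?F n) =
         (\<Prod>j\<in>insert w W. f j (n j)) * \<phi> (\<lambda>j. if j \<in> B then n j else 0)" by simp
  next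
    fix b :: "nat \<times> (nat \<Rightarrow> nat)" assume b: "b \<in> UNIV \<times> ?So"
    then obtain k0 n0 where kn: "b = (k0, n0)" "n0 \<in> ?So" by auto
    have "n0 w = 0" using kn insert(2) wB by auto
    then show "((case b of (k, n) \<Rightarrow> n(w := k)) w, (case b of (k, n) \<Rightarrow> n(w := k))(w := 0)) = b"
      using kn by auto
    show "(case b of (k, n) \<Rightarrow> n(w := k)) \<in> ?Sn" using kn by auto
  qed
qed

locale skp =
  fixes J :: nat and r :: "nat \<Rightarrow> nat \<Rightarrow> real" and \<alpha> :: "nat \<Rightarrow> real"
  assumes r_nonneg: "\<And>i j. i \<le> J \<Longrightarrow> j \<le> J \<Longrightarrow> 0 \<le> r i j"
    and r_stoch: "\<And>i. i \<le> J \<Longrightarrow> (\<Sum>j\<le>J. r i j) = 1"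
    and r_irred: "\<And>i j. i \<le> J \<Longrightarrow> j \<le> J \<Longrightarrow> (i, j) \<in> {(a, b). a \<le> J \<and> b \<le> J \<and> 0 < r a b}\<^sup>+"
    and \<alpha>_range: "\<And>j. j \<le> J \<Longrightarrow> 0 \<le> \<alpha> j \<and> \<alpha> j \<le> 1"
    and \<alpha>0: "\<alpha> 0 = 1"
begin

abbreviation "Rr \<equiv> {(a, b). a \<le> J \<and> b \<le> J \<and> 0 < r a b}"

lemma maxp:
  assumes v: "\<And>i. i \<le> J \<Longrightarrow> (\<Sum>k\<le>J. r i k * (1 - \<alpha> k) * v k) \<le> v i"
  shows "\<And>i. i \<le> J \<Longrightarrow> 0 \<le> v i"
proof (rule ccontr)
  fix i1 assume i1: "i1 \<le> J" "\<not> 0 \<le> v i1"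
  define m where "m = Min (v ` {..J})"
  have mle: "m \<le> v k" if "k \<le> J" for k unfolding m_def using that by (intro Min_le) auto
  have "m \<in> v ` {..J}" unfolding m_def by (intro Min_in) auto
  then obtain i0 where i0: "i0 \<le> J" "v i0 = m" by auto
  have mneg: "m < 0" using mle[OF i1(1)] i1(2) by simp
  define K where "K = {i. i \<le> J \<and> v i = m}"
  have stp: "\<alpha> k = 0 \<and> k \<in> K" if iK: "i \<in> K" and k: "k \<le> J" and rik: "0 < r i k" for i k
  proof -
    have iJ: "i \<le> J" and vi: "v i = m" using iK unfolding K_def by auto
    let ?t = "\<lambda>k. r i k * ((1 - \<alpha> k) * (v k - m) + \<alpha> k * (- m))"
    have tnn: "0 \<le> ?t k" if "k \<le> J" for k
      using r_nonneg[OF iJ that] \<alpha>_range[OF that] mle[OF that] mneg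
      by (intro mult_nonneg_nonneg add_nonneg_nonneg) auto
    have "(\<Sum>k\<le>J. ?t k) = (\<Sum>k\<le>J. r i k * (1 - \<alpha> k) * v k) - m * (\<Sum>k\<le>J. r i k)"
      by (simp add: sum_distrib_left sum_subtractf[symmetric] algebra_simps)
    also have "\<dots> \<le> v i - m" using v[OF iJ] r_stoch[OF iJ] by simp
    also have "\<dots> = 0" using vi by simp
    finally have "(\<Sum>k\<le>J. ?t k) \<le> 0" .
    then have "(\<Sum>k\<le>J. ?t k) = 0" using sum_nonneg[of "{..J}" ?t] tnn by force
    then have "?t k = 0" using sum_nonneg_eq_0_iff[of "{..J}" ?t] tnn k by auto
    then have z: "(1 - \<alpha> k) * (v k - m) + \<alpha> k * (- m) = 0" using rik by simp
    have a: "0 \<le> (1 - \<alpha> k) * (v k - m)" using \<alpha>_range[OF k] mle[OF k] by simp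
    have b: "0 \<le> \<alpha> k * (- m)" using \<alpha>_range[OF k] mneg by (simp add: mult_nonneg_nonpos)
    have "\<alpha> k * (- m) = 0" using a b z by linarith
    then have ak: "\<alpha> k = 0" using mneg by simp
    then have "v k = m" using z by simp
    then show ?thesis using ak k unfolding K_def by simp
  qed
  have tr: "\<alpha> j = 0 \<and> j \<in> K" if "(i, j) \<in> Rr\<^sup>+" "i \<in> K" for i j
    using that(1,2)
  proof (induction rule: trancl_induct)
    case (base y) then show ?case using stp by auto
  next
    case (step y z) then show ?case using stp by auto
  qed
  have "\<alpha> 0 = 0" using tr[OF r_irred[OF i0(1), of 0]] i0 unfolding K_def by auto
  then show False using \<alpha>0 by simp
qed

lemma homog0:
  assumes v: "\<And>i. i \<le> J \<Longrightarrow> v i - (\<Sum>k\<le>J. r i k * (1 - \<alpha> k) * v k) = 0"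
  shows "\<And>i. i \<le> J \<Longrightarrow> v i = 0"
proof -
  fix i assume i: "i \<le> J"
  have "0 \<le> v i"
  proof (rule maxp[OF _ i])
    fix i assume "i \<le> J"
    then show "(\<Sum>k\<le>J. r i k * (1 - \<alpha> k) * v k) \<le> v i" using v[of i] by simp
  qed
  moreover have "0 \<le> - v i"
  proof (rule maxp[of "\<lambda>i. - v i", OF _ i])
    fix i assume "i \<le> J"
    then show "(\<Sum>k\<le>J. r i k * (1 - \<alpha> k) * - v k) \<le> - v i"
      using v[of i] by (simp add: sum_negf)
  qed
  ultimately show "v i = 0" by simp
qed

primrec Yit :: "nat \<Rightarrow> nat \<Rightarrow> nat \<Rightarrow> real" where
  "Yit 0 i j = 0"
| "Yit (Suc t) i j = r i j * \<alpha> j + (\<Sum>k\<le>J. r i k * (1 - \<alpha> k) * Yit t k j)"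

lemma Yit_nonneg: "i \<le> J \<Longrightarrow> j \<le> J \<Longrightarrow> 0 \<le> Yit t i j"
proof (induction t arbitrary: i)
  case (Suc t)
  then show ?case using r_nonneg \<alpha>_range
    by (auto intro!: add_nonneg_nonneg sum_nonneg mult_nonneg_nonneg)
qed simp

lemma Yit_mono: "i \<le> J \<Longrightarrow> j \<le> J \<Longrightarrow> Yit t i j \<le> Yit (Suc t) i j"
proof (induction t arbitrary: i)
  case 0
  then show ?case using Yit_nonneg[of i j "Suc 0"] by simp
next
  case (Suc t)
  have "(\<Sum>k\<le>J. r i k * (1 - \<alpha> k) * Yit t k j) \<le> (\<Sum>k\<le>J. r i k * (1 - \<alpha> k) * Yit (Suc t) k j)"
  proof (rule sum_mono)
    fix k assume "k \<in> {..J}"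
    then show "r i k * (1 - \<alpha> k) * Yit t k j \<le> r i k * (1 - \<alpha> k) * Yit (Suc t) k j"
      using Suc r_nonneg[of i k] \<alpha>_range[of k] by (intro mult_left_mono) auto
  qed
  then show ?case by simp
qed

lemma Yit_rowsum: "i \<le> J \<Longrightarrow> (\<Sum>j\<le>J. Yit t i j) \<le> 1"
proof (induction t arbitrary: i)
  case (Suc t)
  have "(\<Sum>j\<le>J. Yit (Suc t) i j) = (\<Sum>j\<le>J. r i j * \<alpha> j) + (\<Sum>k\<le>J. r i k * (1 - \<alpha> k) * (\<Sum>j\<le>J. Yit t k j))"
    by (simp add: sum.distrib sum_distrib_left) (rule sum.swap)
  also have "\<dots> \<le> (\<Sum>j\<le>J. r i j * \<alpha> j) + (\<Sum>k\<le>J. r i k * (1 - \<alpha> k))"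
  proof (intro add_left_mono sum_mono)
    fix k assume "k \<in> {..J}"
    then show "r i k * (1 - \<alpha> k) * (\<Sum>j\<le>J. Yit t k j) \<le> r i k * (1 - \<alpha> k)"
      using Suc r_nonneg[of i k] \<alpha>_range[of k] by (intro mult_left_le) auto
  qed
  also have "\<dots> = (\<Sum>j\<le>J. r i j)" by (simp add: sum.distrib[symmetric] algebra_simps)
  also have "\<dots> = 1" using r_stoch Suc by simp
  finally show ?case .
qed simp

lemma Yit_le1: "i \<le> J \<Longrightarrow> j \<le> J \<Longrightarrow> Yit t i j \<le> 1"
proof -
  assume i: "i \<le> J" and j: "j \<le> J"
  have "Yit t i j \<le> (\<Sum>j\<le>J. Yit t i j)"
    using j Yit_nonneg[OF i] by (intro member_le_sum) auto
  then show ?thesis using Yit_rowsum[OF i, of t] by simp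
qed

definition Lim where "Lim i j = lim (\<lambda>t. Yit t i j)"

lemma Yit_lim: "i \<le> J \<Longrightarrow> j \<le> J \<Longrightarrow> (\<lambda>t. Yit t i j) \<longlonglongrightarrow> Lim i j"
proof -
  assume i: "i \<le> J" and j: "j \<le> J"
  have "incseq (\<lambda>t. Yit t i j)" using Yit_mono[OF i j] by (simp add: incseq_Suc_iff)
  then obtain L where "(\<lambda>t. Yit t i j) \<longlonglongrightarrow> L" using incseq_convergent[of _ 1] Yit_le1[OF i j] by blast
  then show ?thesis unfolding Lim_def by (simp add: limI)
qed

lemma Lim_eq: "i \<le> J \<Longrightarrow> j \<le> J \<Longrightarrow> Lim i j - (\<Sum>k\<le>J. r i k * (1 - \<alpha> k) * Lim k j) = r i j * \<alpha> j"
proof -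
  assume i: "i \<le> J" and j: "j \<le> J"
  have "(\<lambda>t. Yit (Suc t) i j) \<longlonglongrightarrow> Lim i j" using LIMSEQ_Suc[OF Yit_lim[OF i j]] .
  moreover have "(\<lambda>t. Yit (Suc t) i j) \<longlonglongrightarrow> r i j * \<alpha> j + (\<Sum>k\<le>J. r i k * (1 - \<alpha> k) * Lim k j)"
    unfolding Yit.simps using Yit_lim j by (intro tendsto_intros) auto
  ultimately show ?thesis using LIMSEQ_unique by fastforce
qed

definition Xs where "Xs i j = (if i \<le> J \<and> j \<le> J then Lim i j else 0)"

lemma skip_char: "skip_matrix J r \<alpha> = Xs"
  unfolding skip_matrix_def
proof (rule the_equality)
  show "(\<forall>i j. J < i \<or> J < j \<longrightarrow> Xs i j = 0) \<and>
    (\<forall>i\<le>J. \<forall>j\<le>J. Xs i j - (\<Sum>k\<le>J. r i k * (1 - \<alpha> k) * Xs k j) = r i j * \<alpha> j)"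
  proof (intro conjI allI impI)
    fix i j assume "J < i \<or> J < j" then show "Xs i j = 0" unfolding Xs_def by auto
  next
    fix i j assume i: "i \<le> J" and j: "j \<le> J"
    have "(\<Sum>k\<le>J. r i k * (1 - \<alpha> k) * Xs k j) = (\<Sum>k\<le>J. r i k * (1 - \<alpha> k) * Lim k j)"
      using j by (intro sum.cong refl) (auto simp: Xs_def)
    then show "Xs i j - (\<Sum>k\<le>J. r i k * (1 - \<alpha> k) * Xs k j) = r i j * \<alpha> j"
      using Lim_eq[OF i j] i j by (simp add: Xs_def)
  qed
next
  fix X assume X: "(\<forall>i j. J < i \<or> J < j \<longrightarrow> X i j = 0) \<and>
    (\<forall>i\<le>J. \<forall>j\<le>J. X i j - (\<Sum>k\<le>J. r i k * (1 - \<alpha> k) * X k j) = r i j * \<alpha> j)"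
  show "X = Xs"
  proof (intro ext)
    fix i j
    show "X i j = Xs i j"
    proof (cases "i \<le> J \<and> j \<le> J")
      case True
      have "X i j - Xs i j = 0"
      proof (rule homog0[of "\<lambda>i. X i j - Xs i j"])
        fix i assume i: "i \<le> J"
        have "(\<Sum>k\<le>J. r i k * (1 - \<alpha> k) * Xs k j) = (\<Sum>k\<le>J. r i k * (1 - \<alpha> k) * Lim k j)"
          using True by (intro sum.cong refl) (auto simp: Xs_def)
        moreover have "(\<Sum>k\<le>J. r i k * (1 - \<alpha> k) * (X k j - Xs k j)) =
            (\<Sum>k\<le>J. r i k * (1 - \<alpha> k) * X k j) - (\<Sum>k\<le>J. r i k * (1 - \<alpha> k) * Xs k j)"
          by (simp add: right_diff_distrib sum_subtractf)
        moreover have "X i j - (\<Sum>k\<le>J. r i k * (1 - \<alpha> k) * X k j) = r i j * \<alpha> j"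
          using X True i by blast
        moreover have "Xs i j = Lim i j" using i True by (simp add: Xs_def)
        ultimately show "X i j - Xs i j - (\<Sum>k\<le>J. r i k * (1 - \<alpha> k) * (X k j - Xs k j)) = 0"
          using Lim_eq[OF i, of j] True by simp
      qed (use True in auto)
      then show ?thesis by simp
    next
      case False
      then show ?thesis using X unfolding Xs_def by auto
    qed
  qed
qed

abbreviation "sk \<equiv> skip_matrix J r \<alpha>"

lemma sk_eq: "i \<le> J \<Longrightarrow> j \<le> J \<Longrightarrow> sk i j - (\<Sum>k\<le>J. r i k * (1 - \<alpha> k) * sk k j) = r i j * \<alpha> j"
  unfolding skip_char Xs_def using Lim_eq by (auto intro!: sum.cong)

lemma sk_out: "J < i \<or> J < j \<Longrightarrow> sk i j = 0"
  unfolding skip_char Xs_def by auto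

lemma sk_nonneg: "i \<le> J \<Longrightarrow> j \<le> J \<Longrightarrow> 0 \<le> sk i j"
proof -
  assume i: "i \<le> J" and j: "j \<le> J"
  show ?thesis
  proof (rule maxp[of "\<lambda>i. sk i j", OF _ i])
    fix i assume i: "i \<le> J"
    show "(\<Sum>k\<le>J. r i k * (1 - \<alpha> k) * sk k j) \<le> sk i j"
    proof -
      have "0 \<le> r i j * \<alpha> j" using r_nonneg[OF i j] \<alpha>_range[OF j] by simp
      then show ?thesis using sk_eq[OF i j] by simp
    qed
  qed
qed

lemma sk_ge: "i \<le> J \<Longrightarrow> j \<le> J \<Longrightarrow> r i j * \<alpha> j \<le> sk i j"
proof -
  assume i: "i \<le> J" and j: "j \<le> J"
  have "0 \<le> (\<Sum>k\<le>J. r i k * (1 - \<alpha> k) * sk k j)"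
    using r_nonneg[OF i] \<alpha>_range sk_nonneg[OF _ j] by (intro sum_nonneg mult_nonneg_nonneg) auto
  then show ?thesis using sk_eq[OF i j] by simp
qed

lemma sk_zero_col: "j \<le> J \<Longrightarrow> \<alpha> j = 0 \<Longrightarrow> sk i j = 0"
proof (cases "i \<le> J")
  case True
  assume j: "j \<le> J" and a: "\<alpha> j = 0"
  show ?thesis
    by (rule homog0[of "\<lambda>i. sk i j", OF _ True]) (use sk_eq j a in simp)
qed (simp add: sk_out)

lemma sk_rowsum: "i \<le> J \<Longrightarrow> (\<Sum>j\<le>J. sk i j) = 1"
proof -
  assume i: "i \<le> J"
  have "(\<Sum>j\<le>J. sk i j) - 1 = 0"
  proof (rule homog0[of "\<lambda>i. (\<Sum>j\<le>J. sk i j) - 1", OF _ i])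
    fix i assume i: "i \<le> J"
    have e0: "(\<Sum>k\<le>J. r i k * (1 - \<alpha> k) * (\<Sum>j\<le>J. sk k j)) = (\<Sum>j\<le>J. \<Sum>k\<le>J. r i k * (1 - \<alpha> k) * sk k j)"
      by (simp only: sum_distrib_left) (rule sum.swap)
    have e1: "(\<Sum>k\<le>J. r i k * (1 - \<alpha> k) * ((\<Sum>j\<le>J. sk k j) - 1))
      = (\<Sum>j\<le>J. \<Sum>k\<le>J. r i k * (1 - \<alpha> k) * sk k j) - (\<Sum>k\<le>J. r i k * (1 - \<alpha> k))"
      unfolding e0[symmetric] by (simp add: right_diff_distrib sum_subtractf)
    have "(\<Sum>j\<le>J. \<Sum>k\<le>J. r i k * (1 - \<alpha> k) * sk k j) = (\<Sum>j\<le>J. sk i j - r i j * \<alpha> j)"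
    proof (rule sum.cong[OF refl])
      fix j assume "j \<in> {..J}"
      then show "(\<Sum>k\<le>J. r i k * (1 - \<alpha> k) * sk k j) = sk i j - r i j * \<alpha> j" using sk_eq[OF i, of j] by simp
    qed
    then have e2: "(\<Sum>j\<le>J. \<Sum>k\<le>J. r i k * (1 - \<alpha> k) * sk k j) = (\<Sum>j\<le>J. sk i j) - (\<Sum>j\<le>J. r i j * \<alpha> j)"
      by (simp add: sum_subtractf)
    have e3: "(\<Sum>k\<le>J. r i k * (1 - \<alpha> k)) + (\<Sum>j\<le>J. r i j * \<alpha> j) = 1"
      using r_stoch[OF i] by (simp add: sum.distrib[symmetric] algebra_simps)
    show "(\<Sum>j\<le>J. sk i j) - 1 - (\<Sum>k\<le>J. r i k * (1 - \<alpha> k) * ((\<Sum>j\<le>J. sk k j) - 1)) = 0"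
      unfolding e1 e2 using e3 by simp
  qed
  then show ?thesis by simp
qed

lemma sk_traffic:
  assumes eta: "\<And>j. j \<le> J \<Longrightarrow> \<eta> j = (\<Sum>i\<le>J. \<eta> i * r i j)"
    and j: "j \<le> J"
  shows "(\<Sum>i\<le>J. \<eta> i * \<alpha> i * sk i j) = \<eta> j * \<alpha> j"
proof -
  have "(\<Sum>i\<le>J. \<eta> i * (1 - \<alpha> i) * sk i j) = (\<Sum>i\<le>J. (\<Sum>l\<le>J. \<eta> l * r l i) * (1 - \<alpha> i) * sk i j)"
  proof (rule sum.cong[OF refl])
    fix i assume "i \<in> {..J}"
    then show "\<eta> i * (1 - \<alpha> i) * sk i j = (\<Sum>l\<le>J. \<eta> l * r l i) * (1 - \<alpha> i) * sk i j"
      using eta[of i] by simp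
  qed
  also have "\<dots> = (\<Sum>l\<le>J. \<eta> l * (\<Sum>i\<le>J. r l i * (1 - \<alpha> i) * sk i j))"
    by (simp add: sum_distrib_left sum_distrib_right algebra_simps) (rule sum.swap)
  also have "\<dots> = (\<Sum>l\<le>J. \<eta> l * (sk l j - r l j * \<alpha> j))"
  proof (intro sum.cong refl)
    fix l assume "l \<in> {..J}"
    then show "\<eta> l * (\<Sum>i\<le>J. r l i * (1 - \<alpha> i) * sk i j) = \<eta> l * (sk l j - r l j * \<alpha> j)"
      using sk_eq[of l j] j by simp
  qed
  finally have A: "(\<Sum>i\<le>J. \<eta> i * (1 - \<alpha> i) * sk i j) = (\<Sum>l\<le>J. \<eta> l * sk l j) - \<alpha> j * (\<Sum>l\<le>J. \<eta> l * r l j)"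
    by (simp add: algebra_simps sum_subtractf sum_distrib_left)
  have "(\<Sum>i\<le>J. \<eta> i * \<alpha> i * sk i j) = (\<Sum>i\<le>J. \<eta> i * sk i j) - (\<Sum>i\<le>J. \<eta> i * (1 - \<alpha> i) * sk i j)"
    by (simp add: sum_subtractf[symmetric] algebra_simps)
  also have "\<dots> = \<alpha> j * (\<Sum>l\<le>J. \<eta> l * r l j)" unfolding A by simp
  also have "\<dots> = \<eta> j * \<alpha> j" using eta[OF j] by simp
  finally show ?thesis .
qed

end

context skp begin
lemma eta_nonneg:
  assumes eta: "\<And>j. j \<le> J \<Longrightarrow> \<eta> j = (\<Sum>i\<le>J. \<eta> i * r i j)" and eta0: "0 < \<eta> 0"
  shows "\<And>j. j \<le> J \<Longrightarrow> 0 \<le> \<eta> j"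
proof (rule ccontr)
  fix j1 assume j1: "j1 \<le> J" "\<not> 0 \<le> \<eta> j1"
  define K where "K = {j. j \<le> J \<and> \<eta> j < 0}"
  have K0: "0 \<notin> K" using eta0 unfolding K_def by auto
  have finK: "finite K" unfolding K_def by auto
  have KJ: "K \<subseteq> {..J}" unfolding K_def by auto
  define c where "c i = (\<Sum>j\<in>K. r i j)" for i
  have c_le: "c i \<le> 1" if "i \<le> J" for i
  proof -
    have "c i \<le> (\<Sum>j\<le>J. r i j)" unfolding c_def using KJ r_nonneg[OF that]
      by (intro sum_mono2) auto
    then show ?thesis using r_stoch[OF that] by simp
  qed
  have c_ge: "0 \<le> c i" if "i \<le> J" for i unfolding c_def using KJ r_nonneg[OF that] by (intro sum_nonneg) auto
  have "(\<Sum>j\<in>K. \<eta> j) = (\<Sum>j\<in>K. \<Sum>i\<le>J. \<eta> i * r i j)"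
  proof (rule sum.cong[OF refl])
    fix j assume "j \<in> K"
    then have "j \<le> J" using KJ by auto
    then show "\<eta> j = (\<Sum>i\<le>J. \<eta> i * r i j)" by (rule eta)
  qed
  also have "\<dots> = (\<Sum>i\<le>J. \<eta> i * c i)" unfolding c_def sum_distrib_left by (rule sum.swap)
  also have "\<dots> = (\<Sum>i\<in>K. \<eta> i * c i) + (\<Sum>i\<in>{..J}-K. \<eta> i * c i)"
    using sum.subset_diff[OF KJ, of "\<lambda>i. \<eta> i * c i"] by simp
  finally have eqK: "(\<Sum>j\<in>K. \<eta> j) = (\<Sum>i\<in>K. \<eta> i * c i) + (\<Sum>i\<in>{..J}-K. \<eta> i * c i)" .
  have "(\<Sum>i\<in>{..J}-K. \<eta> i * c i) \<ge> 0"
  proof (rule sum_nonneg)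
    fix i assume i: "i \<in> {..J} - K"
    then have "0 \<le> \<eta> i" unfolding K_def by auto
    then show "0 \<le> \<eta> i * c i" using c_ge i by auto
  qed
  then have "(\<Sum>i\<in>K. \<eta> i * c i) \<le> (\<Sum>j\<in>K. \<eta> j)" using eqK by linarith
  then have "0 \<le> (\<Sum>i\<in>K. \<eta> i * (1 - c i))" by (simp add: algebra_simps sum_subtractf)
  moreover have tle: "\<eta> i * (1 - c i) \<le> 0" if "i \<in> K" for i
  proof -
    have "\<eta> i < 0" "i \<le> J" using that unfolding K_def by auto
    then show ?thesis using c_le[of i] by (simp add: mult_nonpos_nonneg)
  qed
  ultimately have "(\<Sum>i\<in>K. - (\<eta> i * (1 - c i))) = 0"
    using sum_nonpos[of K "\<lambda>i. \<eta> i * (1 - c i)"] by (simp add: sum_negf)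
  then have z: "\<eta> i * (1 - c i) = 0" if "i \<in> K" for i
    using sum_nonneg_eq_0_iff[OF finK, of "\<lambda>i. - (\<eta> i * (1 - c i))"] tle that by auto
  have cl: "j \<in> K" if iK: "i \<in> K" and j: "j \<le> J" and rij: "0 < r i j" for i j
  proof (rule ccontr)
    assume jK: "j \<notin> K"
    have iJ: "i \<le> J" and ni: "\<eta> i < 0" using iK unfolding K_def by auto
    have "c i = 1" using z[OF iK] ni by simp
    have "(\<Sum>j\<le>J. r i j) = c i + (\<Sum>j\<in>{..J}-K. r i j)"
      unfolding c_def using sum.subset_diff[OF KJ, of "r i"] by simp
    then have s0: "(\<Sum>j\<in>{..J}-K. r i j) = 0" using r_stoch[OF iJ] \<open>c i = 1\<close> by simp
    have "r i j \<le> (\<Sum>j\<in>{..J}-K. r i j)" using j jK r_nonneg[OF iJ] by (intro member_le_sum) auto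
    then show False using s0 rij by simp
  qed
  have j1K: "j1 \<in> K" using j1 unfolding K_def by auto
  have tr: "j \<in> K" if "(i, j) \<in> Rr\<^sup>+" "i \<in> K" for i j
    using that
  proof (induction rule: trancl_induct)
    case (base y) then show ?case using cl[of i y] by blast
  next
    case (step y z) then show ?case using cl[of y z] by blast
  qed
  have "0 \<in> K" using tr[OF r_irred[OF j1(1), of 0] j1K] by simp
  then show False using K0 by simp
qed

lemma eta_pos:
  assumes eta: "\<And>j. j \<le> J \<Longrightarrow> \<eta> j = (\<Sum>i\<le>J. \<eta> i * r i j)" and eta0: "0 < \<eta> 0"
  shows "\<And>j. j \<le> J \<Longrightarrow> 0 < \<eta> j"
proof -
  fix j assume j: "j \<le> J"
  have nn: "\<And>j. j \<le> J \<Longrightarrow> 0 \<le> \<eta> j" by (rule eta_nonneg[OF eta eta0])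
  have stp: "0 < \<eta> z" if "0 < \<eta> y" "y \<le> J" "z \<le> J" "0 < r y z" for y z
  proof -
    have "\<eta> y * r y z \<le> (\<Sum>i\<le>J. \<eta> i * r i z)"
      using that nn r_nonneg[OF _ that(3)] by (intro member_le_sum) auto
    moreover have "0 < \<eta> y * r y z" using that(1,4) by simp
    ultimately show ?thesis using eta[OF that(3)] by linarith
  qed
  have pz: "0 < \<eta> z \<and> z \<le> J" if "(0, z) \<in> Rr\<^sup>+" for z
    using that
  proof (induction rule: trancl_induct)
    case (base y)
    then have "y \<le> J" "0 < r 0 y" by auto
    then show ?case using stp[of 0 y] eta0 by simp
  next
    case (step y z)
    then have "z \<le> J" "0 < r y z" by auto
    then show ?case using stp[of y z] step.IH by simp
  qed
  have "(0, j) \<in> Rr\<^sup>+" by (rule r_irred) (use j in auto)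
  then show "0 < \<eta> j" using pz by blast
qed

end

locale nfl =
  fixes \<eta> :: "nat \<Rightarrow> real" and \<mu> :: "nat \<Rightarrow> nat \<Rightarrow> real" and j :: nat
  assumes eta_pos: "0 < \<eta> j" and mu_pos: "\<And>k. 1 \<le> k \<Longrightarrow> 0 < \<mu> j k"
    and summ: "summable (\<lambda>m. \<Prod>k\<in>{1..m}. \<eta> j / \<mu> j k)"
begin

abbreviation "c m \<equiv> (\<Prod>k\<in>{1..m}. \<eta> j / \<mu> j k)"

lemma c_pos: "0 < c m"
  using eta_pos mu_pos by (intro prod_pos) auto

lemma C_pos: "0 < norm_const \<eta> \<mu> j"
proof -
  have "sum (\<lambda>m. c m) {0} \<le> (\<Sum>m. c m)"
    by (rule sum_le_suminf[OF summ]) (use c_pos in \<open>auto intro: less_imp_le\<close>)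
  then show ?thesis unfolding norm_const_def by simp
qed

lemma nf_pos: "0 < node_factor \<eta> \<mu> j m"
  unfolding node_factor_def using c_pos C_pos by simp

lemma nf_has_sum: "(node_factor \<eta> \<mu> j has_sum 1) UNIV"
proof -
  have "(\<lambda>m. c m / norm_const \<eta> \<mu> j) sums (norm_const \<eta> \<mu> j / norm_const \<eta> \<mu> j)"
    unfolding norm_const_def by (intro sums_divide summable_sums summ)
  then have "(node_factor \<eta> \<mu> j) sums 1" using C_pos unfolding node_factor_def by simp
  then show ?thesis by (rule sums_nonneg_imp_has_sum) (auto intro: less_imp_le[OF nf_pos])
qed

lemma nf_rec: "0 < m \<Longrightarrow> node_factor \<eta> \<mu> j m * \<mu> j m = node_factor \<eta> \<mu> j (m - 1) * \<eta> j"
proof -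
  assume "0 < m"
  then obtain n where m: "m = Suc n" by (cases m) auto
  have "c (Suc n) = \<eta> j / \<mu> j (Suc n) * c n" by (rule prod.nat_ivl_Suc') simp
  then have e: "c (Suc n) * \<mu> j (Suc n) = c n * \<eta> j" using mu_pos[of "Suc n"] by (simp add: field_simps)
  have "c (Suc n) / norm_const \<eta> \<mu> j * \<mu> j (Suc n) = (c (Suc n) * \<mu> j (Suc n)) / norm_const \<eta> \<mu> j" by simp
  also have "\<dots> = (c n * \<eta> j) / norm_const \<eta> \<mu> j" by (simp only: e)
  also have "\<dots> = c n / norm_const \<eta> \<mu> j * \<eta> j" by simp
  finally show ?thesis unfolding m node_factor_def by simp
qed

end

locale mc =
  fixes S :: "'s set" and q :: "'s \<Rightarrow> 's \<Rightarrow> real" and \<pi> :: "'s \<Rightarrow> real"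
  assumes q_nonneg: "\<And>m n. m \<in> S \<Longrightarrow> n \<in> S \<Longrightarrow> 0 \<le> q m n"
    and q_summ: "\<And>m. m \<in> S \<Longrightarrow> q m summable_on (S - {m})"
    and Q_pos: "\<And>m. m \<in> S \<Longrightarrow> 0 < out_rate S q m"
    and pred_fin: "\<And>j. j \<in> S \<Longrightarrow> finite {l\<in>S. q l j \<noteq> 0}"
    and stat: "stationary_dist S q \<pi>"
    and \<pi>_pos: "\<And>m. m \<in> S \<Longrightarrow> 0 < \<pi> m"
    and \<nu>_summ: "(\<lambda>m. \<pi> m * out_rate S q m) summable_on S"
begin

abbreviation "Q \<equiv> out_rate S q"
abbreviation "P \<equiv> jump_prob S q"
definition "\<nu> m = \<pi> m * Q m"
definition "Pr j = {l\<in>S. P l j \<noteq> 0}"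

lemma Pr_fin: "j \<in> S \<Longrightarrow> finite (Pr j)"
proof -
  assume j: "j \<in> S"
  have "Pr j \<subseteq> {l\<in>S. q l j \<noteq> 0}" unfolding Pr_def jump_prob_def by (auto split: if_splits)
  then show ?thesis using pred_fin[OF j] finite_subset by blast
qed

lemma Pr_sub: "Pr j \<subseteq> S" unfolding Pr_def by auto

lemma P_nonneg: "l \<in> S \<Longrightarrow> n \<in> S \<Longrightarrow> 0 \<le> P l n"
  unfolding jump_prob_def using q_nonneg Q_pos[of l] by auto

lemma q_has_sum: "m \<in> S \<Longrightarrow> (q m has_sum Q m) (S - {m})"
  using q_summ unfolding out_rate_def by (simp add: has_sum_infsum)

lemma P_row: "l \<in> S \<Longrightarrow> (P l has_sum 1) S"
proof -
  assume l: "l \<in> S"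
  have "((\<lambda>n. q l n * inverse (Q l)) has_sum (Q l * inverse (Q l))) (S - {l})"
    by (rule has_sum_cmult_left[OF q_has_sum[OF l]])
  then have h: "((\<lambda>n. q l n / Q l) has_sum 1) (S - {l})" using Q_pos[OF l] by (simp add: field_simps)
  show ?thesis
    by (rule has_sum_cong_neutral[THEN iffD1, OF _ _ _ h]) (auto simp: jump_prob_def)
qed

lemma \<nu>_nonneg: "m \<in> S \<Longrightarrow> 0 \<le> \<nu> m"
  unfolding \<nu>_def using \<pi>_pos Q_pos by (simp add: less_imp_le)

lemma \<nu>_pos: "m \<in> S \<Longrightarrow> 0 < \<nu> m"
  unfolding \<nu>_def using \<pi>_pos Q_pos by simp

lemma \<nu>_inv_has_sum: "j \<in> S \<Longrightarrow> ((\<lambda>l. \<nu> l * P l j) has_sum \<nu> j) S"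
proof -
  assume j: "j \<in> S"
  have h: "((\<lambda>n. \<pi> n * q n j) has_sum (\<pi> j * Q j)) (S - {j})"
    using stat j unfolding stationary_dist_def by blast
  show ?thesis unfolding \<nu>_def
  proof (rule has_sum_cong_neutral[THEN iffD1, OF _ _ _ h])
    fix x assume "x \<in> (S - {j}) \<inter> S"
    then show "\<pi> x * q x j = \<pi> x * Q x * P x j" using Q_pos[of x] by (auto simp: jump_prob_def)
  qed (auto simp: jump_prob_def)
qed

lemma PrS: "l \<in> Pr j \<Longrightarrow> l \<in> S" unfolding Pr_def by auto

lemma colsum: "j \<in> S \<Longrightarrow> (\<And>l. l \<in> S \<Longrightarrow> f l = g l) \<Longrightarrow> ((\<lambda>l. f l * P l j) has_sum (\<Sum>l\<in>Pr j. g l * P l j)) S"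
proof -
  assume j: "j \<in> S" and fg: "\<And>l. l \<in> S \<Longrightarrow> f l = g l"
  show ?thesis
  proof (rule has_sum_finite_neutralI[where B="Pr j"])
    show "finite (Pr j)" by (rule Pr_fin[OF j])
    show "Pr j \<subseteq> S" by (rule Pr_sub)
    show "f x * P x j = 0" if "x \<in> S - Pr j" for x using that unfolding Pr_def by auto
    show "(\<Sum>l\<in>Pr j. g l * P l j) = (\<Sum>x\<in>Pr j. f x * P x j)"
      using fg PrS by (intro sum.cong refl) auto
  qed
qed

lemma \<nu>_inv: "j \<in> S \<Longrightarrow> (\<Sum>l\<in>Pr j. \<nu> l * P l j) = \<nu> j"
  using has_sum_unique[OF colsum[of j \<nu> \<nu>] \<nu>_inv_has_sum] by simp

lemma infsum_colsum: "j \<in> S \<Longrightarrow> infsum (\<lambda>l. f l * P l j) S = (\<Sum>l\<in>Pr j. f l * P l j)"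
  using colsum[of j f f] by (simp add: has_sum_iff)

context
  fixes i assumes iS: "i \<in> S"
begin

abbreviation "T \<equiv> taboo_prob S q i"
definition "T' k j = (\<Sum>l\<in>Pr j. T k l * P l j)"

lemma T_Suc: "j \<in> S \<Longrightarrow> T (Suc k) j = (if j = i then 0 else T' k j)"
  by (simp add: infsum_colsum T'_def)

lemma T_nonneg: "j \<in> S \<Longrightarrow> 0 \<le> T k j"
proof (induction k arbitrary: j)
  case (Suc k)
  have "0 \<le> T' k j" unfolding T'_def
    using Suc PrS P_nonneg by (intro sum_nonneg mult_nonneg_nonneg) auto
  then show ?case using T_Suc[OF Suc.prems] by simp
qed simp

lemma T'_nonneg: "j \<in> S \<Longrightarrow> 0 \<le> T' k j"
  unfolding T'_def using T_nonneg PrS P_nonneg by (intro sum_nonneg mult_nonneg_nonneg) auto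

lemma T_i: "T k i = (if k = 0 then 1 else 0)"
  by (cases k) (simp_all add: T_Suc iS)

lemma T'_0: "j \<in> S \<Longrightarrow> T' 0 j = (\<Sum>l\<in>Pr j. (if l = i then 1 else 0) * P l j)"
  unfolding T'_def by simp

lemma T'_Suc: "T' (Suc k) j = (\<Sum>l\<in>Pr j. (if l = i then 0 else T' k l) * P l j)"
  unfolding T'_def[of "Suc k"]
proof (rule sum.cong[OF refl])
  fix l assume "l \<in> Pr j"
  then have lS: "l \<in> S" by (rule PrS)
  show "T (Suc k) l * P l j = (if l = i then 0 else T' k l) * P l j"
    by (simp only: T_Suc[OF lS])
qed

lemma minimal: "j \<in> S \<Longrightarrow> \<nu> i * (\<Sum>k<K. T' k j) \<le> \<nu> j"
proof (induction K arbitrary: j)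
  case 0 then show ?case using \<nu>_nonneg by simp
next
  case (Suc K)
  have "(\<Sum>k<Suc K. T' k j) = T' 0 j + (\<Sum>k<K. T' (Suc k) j)" by (rule sum.lessThan_Suc_shift)
  also have "\<dots> = (\<Sum>l\<in>Pr j. (if l = i then 1 else (\<Sum>k<K. T' k l)) * P l j)"
  proof -
    have "(\<Sum>k<K. T' (Suc k) j) = (\<Sum>k<K. \<Sum>l\<in>Pr j. (if l = i then 0 else T' k l) * P l j)"
      using T'_Suc by simp
    also have "\<dots> = (\<Sum>l\<in>Pr j. \<Sum>k<K. (if l = i then 0 else T' k l) * P l j)" by (rule sum.swap)
    also have "\<dots> = (\<Sum>l\<in>Pr j. (if l = i then 0 else (\<Sum>k<K. T' k l)) * P l j)"
      by (intro sum.cong refl) (simp add: sum_distrib_right)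
    finally have a: "(\<Sum>k<K. T' (Suc k) j) = (\<Sum>l\<in>Pr j. (if l = i then 0 else (\<Sum>k<K. T' k l)) * P l j)" .
    show ?thesis unfolding a T'_0[OF Suc.prems] sum.distrib[symmetric]
      by (intro sum.cong refl) (simp add: distrib_right[symmetric])
  qed
  finally have e: "\<nu> i * (\<Sum>k<Suc K. T' k j) = (\<Sum>l\<in>Pr j. (\<nu> i * (if l = i then 1 else (\<Sum>k<K. T' k l))) * P l j)"
    by (simp add: sum_distrib_left mult.assoc)
  also have "\<dots> \<le> (\<Sum>l\<in>Pr j. \<nu> l * P l j)"
  proof (rule sum_mono)
    fix l assume l: "l \<in> Pr j"
    then have lS: "l \<in> S" using PrS by auto
    have "\<nu> i * (if l = i then 1 else (\<Sum>k<K. T' k l)) \<le> \<nu> l"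
      using Suc.IH[OF lS] by auto
    then show "\<nu> i * (if l = i then 1 else (\<Sum>k<K. T' k l)) * P l j \<le> \<nu> l * P l j"
      using P_nonneg[OF lS Suc.prems] by (rule mult_right_mono)
  qed
  also have "\<dots> = \<nu> j" by (rule \<nu>_inv[OF Suc.prems])
  finally show ?case .
qed

lemma T_partial_le: "j \<in> S \<Longrightarrow> (\<Sum>k<K. T k j) \<le> \<nu> j / \<nu> i"
proof -
  assume j: "j \<in> S"
  have ni: "0 < \<nu> i" by (rule \<nu>_pos[OF iS])
  show ?thesis
  proof (cases "j = i")
    case True
    have "(\<Sum>k<K. T k j) \<le> 1"
      unfolding True T_i by (cases K) (simp_all add: sum.lessThan_Suc_shift)
    then show ?thesis using True ni by simp
  next
    case False
    show ?thesis
    proof (cases K)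
      case 0 then show ?thesis using \<nu>_nonneg[OF j] ni by simp
    next
      case (Suc K')
      have "(\<Sum>k<K. T k j) = T 0 j + (\<Sum>k<K'. T (Suc k) j)" unfolding Suc by (rule sum.lessThan_Suc_shift)
      also have "\<dots> = (\<Sum>k<K'. T' k j)" using False j by (simp add: T_Suc del: taboo_prob.simps(2))
      also have "\<dots> \<le> \<nu> j / \<nu> i" using minimal[OF j, of K'] ni by (simp add: pos_le_divide_eq mult.commute)
      finally show ?thesis .
    qed
  qed
qed

lemma T_summable: "j \<in> S \<Longrightarrow> summable (\<lambda>k. T k j)"
  by (rule summableI_nonneg_bounded[where x="\<nu> j / \<nu> i"]) (auto intro: T_nonneg T_partial_le)

definition "G j = (\<Sum>k. T k j)"

lemma G_le: "j \<in> S \<Longrightarrow> G j \<le> \<nu> j / \<nu> i"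
  unfolding G_def by (rule suminf_le_const[OF T_summable]) (auto intro: T_partial_le)

lemma G_nonneg: "j \<in> S \<Longrightarrow> 0 \<le> G j"
  unfolding G_def by (rule suminf_nonneg[OF T_summable]) (auto intro: T_nonneg)

lemma G_i: "G i = 1"
proof -
  have "(\<lambda>k. T k i) sums 1" unfolding T_i using sums_single[of 0 "\<lambda>_. 1::real"] by (simp add: eq_commute)
  then show ?thesis unfolding G_def by (simp add: sums_iff)
qed

lemma f_partial: "(\<Sum>k<K. T' k i) \<le> 1"
  using minimal[OF iS, of K] \<nu>_pos[OF iS] by simp

lemma f_summable: "summable (\<lambda>k. T' k i)"
  by (rule summableI_nonneg_bounded[where x=1]) (auto intro: T'_nonneg[OF iS] f_partial)

definition "F = (\<Sum>k. T' k i)"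

lemma T'_summable: "j \<in> S \<Longrightarrow> summable (\<lambda>k. T' k j)"
proof (cases "j = i")
  case True then show ?thesis using f_summable by simp
next
  case False
  assume j: "j \<in> S"
  have "(\<lambda>k. T' k j) = (\<lambda>k. T (Suc k) j)" using False j by (simp add: T_Suc del: taboo_prob.simps(2))
  moreover have "summable (\<lambda>k. T (Suc k) j)"
    using summable_Suc_iff[of "\<lambda>k. T k j"] T_summable[OF j] by simp
  ultimately show ?thesis by simp
qed

lemma G_shift: "j \<in> S \<Longrightarrow> j \<noteq> i \<Longrightarrow> (\<Sum>k. T' k j) = G j"
proof -
  assume j: "j \<in> S" and ji: "j \<noteq> i"
  have "(\<lambda>k. T' k j) = (\<lambda>k. T (Suc k) j)" using ji j by (simp add: T_Suc del: taboo_prob.simps(2))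
  then show ?thesis using suminf_split_head[OF T_summable[OF j]] ji unfolding G_def by simp
qed

lemma colG: "j \<in> S \<Longrightarrow> (\<Sum>l\<in>Pr j. G l * P l j) = (\<Sum>k. T' k j)"
proof -
  assume j: "j \<in> S"
  have "(\<Sum>l\<in>Pr j. G l * P l j) = (\<Sum>l\<in>Pr j. \<Sum>k. T k l * P l j)"
    unfolding G_def using PrS T_summable by (intro sum.cong refl suminf_mult2) auto
  also have "\<dots> = (\<Sum>k. \<Sum>l\<in>Pr j. T k l * P l j)"
    using PrS T_summable by (intro suminf_sum[symmetric] summable_mult2) auto
  finally show ?thesis unfolding T'_def .
qed

definition "\<mu> l = \<nu> l / \<nu> i - G l"

lemma \<mu>_nonneg: "l \<in> S \<Longrightarrow> 0 \<le> \<mu> l"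
  unfolding \<mu>_def using G_le by simp

lemma \<mu>_i: "\<mu> i = 0"
  unfolding \<mu>_def G_i using \<nu>_pos[OF iS] by simp

lemma col\<mu>: "j \<in> S \<Longrightarrow> (\<Sum>l\<in>Pr j. \<mu> l * P l j) = (if j = i then 1 - F else \<mu> j)"
proof -
  assume j: "j \<in> S"
  have "(\<Sum>l\<in>Pr j. \<mu> l * P l j) = (\<Sum>l\<in>Pr j. \<nu> l * P l j) / \<nu> i - (\<Sum>l\<in>Pr j. G l * P l j)"
    unfolding \<mu>_def by (simp add: sum_divide_distrib sum_subtractf algebra_simps)
  also have "\<dots> = \<nu> j / \<nu> i - (\<Sum>k. T' k j)" using \<nu>_inv[OF j] colG[OF j] by simp
  finally show ?thesis using G_shift[OF j] \<nu>_pos[OF iS] unfolding \<mu>_def F_def by auto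
qed

lemma \<mu>_summable: "\<mu> summable_on S"
proof (rule summable_on_comparison_test[where f="\<lambda>l. \<nu> l / \<nu> i"])
  show "(\<lambda>l. \<nu> l / \<nu> i) summable_on S"
    using summable_on_cmult_left[OF \<nu>_summ, of "inverse (\<nu> i)"] unfolding \<nu>_def by (simp add: divide_inverse)
qed (auto simp: \<mu>_def intro: G_le G_nonneg \<mu>_nonneg)

lemma F_eq: "F = 1"
proof -
  define M where "M = infsum \<mu> S"
  have hM: "(\<mu> has_sum M) S" unfolding M_def using \<mu>_summable by simp
  have row: "((\<lambda>n. \<mu> l * P l n) has_sum \<mu> l) S" if "l \<in> S" for l
    using has_sum_cmult_right[OF P_row[OF that], of "\<mu> l"] by simp
  have sig: "((\<lambda>(l, n). \<mu> l * P l n) has_sum M) (S \<times> S)"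
  proof (rule has_sum_SigmaI[where g=\<mu>])
    show "((\<lambda>n. case (l, n) of (l, n) \<Rightarrow> \<mu> l * P l n) has_sum \<mu> l) S" if "l \<in> S" for l
      using row[OF that] by simp
    show "(\<mu> has_sum M) S" by (rule hM)
    show "(\<lambda>(l, n). \<mu> l * P l n) summable_on S \<times> S"
    proof (rule summable_on_SigmaI[where g=\<mu>])
      show "((\<lambda>n. case (l, n) of (l, n) \<Rightarrow> \<mu> l * P l n) has_sum \<mu> l) S" if "l \<in> S" for l
        using row[OF that] by simp
      show "\<mu> summable_on S" by (rule \<mu>_summable)
      show "0 \<le> (case (l, n) of (l, n) \<Rightarrow> \<mu> l * P l n)" if "l \<in> S" "n \<in> S" for l n
        using \<mu>_nonneg[OF that(1)] P_nonneg[OF that] by simp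
    qed
  qed
  then have sig2: "((\<lambda>(n, l). \<mu> l * P l n) has_sum M) (S \<times> S)"
    using has_sum_swap[THEN iffD1, OF sig] by simp
  have cols: "((\<lambda>n. if n = i then 1 - F else \<mu> n) has_sum M) S"
  proof (rule has_sum_SigmaD[OF sig2])
    fix n assume n: "n \<in> S"
    show "((\<lambda>l. case (n, l) of (n, l) \<Rightarrow> \<mu> l * P l n) has_sum (if n = i then 1 - F else \<mu> n)) S"
      using colsum[OF n, of \<mu> \<mu>] col\<mu>[OF n] by simp
  qed
  have fe: "(\<lambda>n. if n = i then 1 - F else \<mu> n) = (\<lambda>n. \<mu> n + (if n = i then 1 - F else 0))"
    using \<mu>_i by (auto simp: fun_eq_iff)
  have h2: "((\<lambda>n. \<mu> n + (if n = i then 1 - F else 0)) has_sum (M + (1 - F))) S"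
    by (rule has_sum_add[OF hM has_sum_point'[OF iS]])
  have "M = M + (1 - F)" using has_sum_unique[OF cols[unfolded fe] h2] .
  then show ?thesis by simp
qed

lemma pos_rec: "pos_recurrent_state S q i"
  unfolding pos_recurrent_state_def
proof
  have e: "(\<lambda>k. \<Sum>\<^sub>\<infinity>l\<in>S. T k l * P l i) = (\<lambda>k. T' k i)"
    using infsum_colsum[OF iS] unfolding T'_def by simp
  show "((\<lambda>k. \<Sum>\<^sub>\<infinity>l\<in>S. T k l * P l i) has_sum 1) UNIV"
    unfolding e
  proof (rule sums_nonneg_imp_has_sum)
    have "(\<lambda>k. T' k i) sums F" unfolding F_def by (rule summable_sums[OF f_summable])
    then show "(\<lambda>k. T' k i) sums 1" using F_eq by simp
    show "0 \<le> T' k i" for k by (rule T'_nonneg[OF iS])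
  qed
  show "(\<lambda>(k, j). T k j / Q j) summable_on UNIV \<times> S"
  proof (rule nonneg_bdd_above_summable_on)
    show "0 \<le> (case x of (k, j) \<Rightarrow> T k j / Q j)" if "x \<in> UNIV \<times> S" for x
      using that T_nonneg Q_pos by (auto intro!: divide_nonneg_pos)
    show "bdd_above (sum (\<lambda>(k, j). T k j / Q j) ` {F. F \<subseteq> UNIV \<times> S \<and> finite F})"
    proof (rule bdd_aboveI2)
      fix F' :: "(nat \<times> 's) set" assume F': "F' \<in> {F. F \<subseteq> UNIV \<times> S \<and> finite F}"
      define K where "K = Suc (Max (insert 0 (fst ` F')))"
      define F2 where "F2 = snd ` F'"
      have finF': "finite F'" and F'S: "F' \<subseteq> UNIV \<times> S" using F' by auto
      have finF2: "finite F2" and F2S: "F2 \<subseteq> S" unfolding F2_def using finF' F'S by auto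
      have sub: "F' \<subseteq> {..<K} \<times> F2"
      proof
        fix x assume x: "x \<in> F'"
        have "fst x \<le> Max (insert 0 (fst ` F'))" using x finF' by (intro Max_ge) auto
        moreover obtain a b where ab: "x = (a, b)" by (cases x)
        ultimately show "x \<in> {..<K} \<times> F2" using x unfolding K_def F2_def
          by (auto simp: less_Suc_eq_le intro: rev_image_eqI)
      qed
      have "sum (\<lambda>(k, j). T k j / Q j) F' \<le> sum (\<lambda>(k, j). T k j / Q j) ({..<K} \<times> F2)"
        using sub F2S T_nonneg Q_pos finF2 by (intro sum_mono2) (auto intro!: divide_nonneg_pos)
      also have "\<dots> = (\<Sum>j\<in>F2. (\<Sum>k<K. T k j) / Q j)"
        by (subst sum.cartesian_product[symmetric]) (simp add: sum.swap[of _ "{..<K}"] sum_divide_distrib)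
      also have "\<dots> \<le> (\<Sum>j\<in>F2. \<pi> j / \<nu> i)"
      proof (rule sum_mono)
        fix j assume "j \<in> F2"
        then have j: "j \<in> S" using F2S by auto
        have "(\<Sum>k<K. T k j) / Q j \<le> (\<nu> j / \<nu> i) / Q j"
          using T_partial_le[OF j, of K] Q_pos[OF j] by (intro divide_right_mono) auto
        also have "\<dots> = \<pi> j / \<nu> i" unfolding \<nu>_def[of j] using Q_pos[OF j] by simp
        finally show "(\<Sum>k<K. T k j) / Q j \<le> \<pi> j / \<nu> i" .
      qed
      also have "\<dots> = (\<Sum>j\<in>F2. \<pi> j) / \<nu> i" by (simp add: sum_divide_distrib)
      also have "\<dots> \<le> 1 / \<nu> i"
      proof -
        have "(\<pi> has_sum 1) S" using stat unfolding stationary_dist_def by blast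
        then have "(\<Sum>j\<in>F2. \<pi> j) \<le> 1"
          using finF2 F2S stat unfolding stationary_dist_def by (intro finite_sum_le_has_sum) auto
        then show ?thesis using \<nu>_pos[OF iS] by (simp add: divide_right_mono)
      qed
      finally show "sum (\<lambda>(k, j). T k j / Q j) F' \<le> 1 / \<nu> i" .
    qed
  qed
qed

end
end

lemma net_rates_nonneg:
  assumes a0: "\<And>i. i \<in> {1..J} \<Longrightarrow> 0 \<le> a i"
    and s0: "\<And>j k. j \<in> {1..J} \<Longrightarrow> 1 \<le> k \<Longrightarrow> 0 \<le> s j k"
    and p0: "\<And>j i. j \<in> {1..J} \<Longrightarrow> i \<le> J \<Longrightarrow> 0 \<le> p j i"
  shows "0 \<le> net_rates J a s p m n"
  unfolding net_rates_def
  using a0 s0 p0 by (intro add_nonneg_nonneg sum_nonneg) (auto intro!: mult_nonneg_nonneg)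

lemma net_rates_zero:
  assumes "\<And>i. i \<in> {1..J} \<Longrightarrow> n \<noteq> m(i := m i + 1) \<or> a i = 0"
    and "\<And>j i. j \<in> {1..J} \<Longrightarrow> i \<in> {1..J} - {j} \<Longrightarrow> 0 < m j \<Longrightarrow> n \<noteq> m(j := m j - 1, i := m i + 1) \<or> s j (m j) * p j i = 0"
    and "\<And>j. j \<in> {1..J} \<Longrightarrow> 0 < m j \<Longrightarrow> n \<noteq> m(j := m j - 1) \<or> s j (m j) * p j 0 = 0"
  shows "net_rates J a s p m n = 0"
proof -
  have 1: "(\<Sum>i\<in>{1..J}. if n = m(i := m i + 1) then a i else 0) = 0"
    by (rule sum.neutral) (use assms(1) in auto)
  have 2: "(\<Sum>j\<in>{1..J}. \<Sum>i\<in>{1..J} - {j}. if 0 < m j \<and> n = m(j := m j - 1, i := m i + 1) then s j (m j) * p j i else 0) = 0"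
  proof (rule sum.neutral, rule ballI, rule sum.neutral, rule ballI)
    fix j i assume "j \<in> {1..J}" "i \<in> {1..J} - {j}"
    then show "(if 0 < m j \<and> n = m(j := m j - 1, i := m i + 1) then s j (m j) * p j i else 0) = 0"
      using assms(2)[of j i] by auto
  qed
  have 3: "(\<Sum>j\<in>{1..J}. if 0 < m j \<and> n = m(j := m j - 1) then s j (m j) * p j 0 else 0) = 0"
  proof (rule sum.neutral, rule ballI)
    fix j assume "j \<in> {1..J}"
    then show "(if 0 < m j \<and> n = m(j := m j - 1) then s j (m j) * p j 0 else 0) = 0"
      using assms(3)[of j] by auto
  qed
  show ?thesis unfolding net_rates_def 1 2 3 by simp
qed

lemma net_pred_fin:
  "finite {l. net_rates J a s p l n \<noteq> 0}"
proof -
  let ?A = "(\<lambda>i. n(i := n i - 1)) ` {1..J} \<union> (\<lambda>(i, k). n(i := n i - 1, k := n k + 1)) ` ({1..J} \<times> {1..J})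
     \<union> (\<lambda>k. n(k := n k + 1)) ` {1..J}"
  have "{l. net_rates J a s p l n \<noteq> 0} \<subseteq> ?A"
  proof
    fix l assume "l \<in> {l. net_rates J a s p l n \<noteq> 0}"
    then have nz: "net_rates J a s p l n \<noteq> 0" by simp
    show "l \<in> ?A"
    proof (rule ccontr)
      assume nA: "l \<notin> ?A"
      have "net_rates J a s p l n = 0"
      proof (rule net_rates_zero)
        fix i assume i: "i \<in> {1..J}"
        show "n \<noteq> l(i := l i + 1) \<or> a i = 0"
          using nA i eq_upd1[of n l i] by auto
      next
        fix j i assume j: "j \<in> {1..J}" and i: "i \<in> {1..J} - {j}" and lj: "0 < l j"
        have "n \<noteq> l(j := l j - 1, i := l i + 1)"
        proof
          assume h: "n = l(j := l j - 1, i := l i + 1)"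
          have ij: "i \<noteq> j" using i by auto
          have "l = n(i := n i - 1, j := n j + 1)" using eq_upd2[OF ij, of l n] h lj by blast
          then have "l \<in> ?A" using i j by auto
          then show False using nA by simp
        qed
        then show "n \<noteq> l(j := l j - 1, i := l i + 1) \<or> s j (l j) * p j i = 0" by simp
      next
        fix j assume j: "j \<in> {1..J}" and lj: "0 < l j"
        show "n \<noteq> l(j := l j - 1) \<or> s j (l j) * p j 0 = 0"
          using nA j eq_upd3[of l j n] lj by auto
      qed
      then show False using nz by simp
    qed
  qed
  moreover have "finite ?A" by auto
  ultimately show ?thesis by (rule finite_subset)
qed

lemma shift_has_sum:
  assumes h: "(\<xi> has_sum c) (net_states J)" and j: "j \<in> {1..J}"
  shows "((\<lambda>m. if 0 < m j then \<xi> (m(j := m j - 1)) else 0) has_sum c) (net_states J)"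
proof -
  let ?S = "net_states J"
  let ?h = "\<lambda>n::nat\<Rightarrow>nat. n(j := n j + 1)"
  let ?g = "\<lambda>m. if 0 < m j then \<xi> (m(j := m j - 1)) else 0"
  have inj: "inj_on ?h ?S"
  proof (rule inj_onI)
    fix x y :: "nat \<Rightarrow> nat" assume "x(j := x j + 1) = y(j := y j + 1)"
    then have "x(j := x j + 1, j := x j) = y(j := y j + 1, j := y j)"
      by (metis add_diff_cancel_right' fun_upd_same)
    then show "x = y" by simp
  qed
  have "((?g \<circ> ?h) has_sum c) ?S"
  proof -
    have "(?g \<circ> ?h) = \<xi>"
    proof (rule ext)
      fix n :: "nat \<Rightarrow> nat"
      have "n(j := n j + 1, j := n j + 1 - 1) = n" by simp
      then show "(?g \<circ> ?h) n = \<xi> n" by simp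
    qed
    then show ?thesis using h by simp
  qed
  then have g1: "(?g has_sum c) (?h ` ?S)" using has_sum_reindex[OF inj] by blast
  show ?thesis
  proof (rule has_sum_cong_neutral[THEN iffD1, OF _ _ _ g1])
    fix x assume x: "x \<in> ?S - ?h ` ?S"
    show "?g x = 0"
    proof (rule ccontr)
      assume "?g x \<noteq> 0"
      then have xj: "0 < x j" by (auto split: if_splits)
      have mem: "x(j := x j - 1) \<in> ?S" using x j by (auto intro: net_states_upd)
      have eq: "x = ?h (x(j := x j - 1))" using xj by simp
      have "x \<in> ?h ` ?S" by (rule image_eqI[where f="?h", OF eq mem])
      then show False using x by simp
    qed
  next
    fix x assume "x \<in> ?h ` ?S - ?S"
    then show "?g x = 0" using j net_states_upd by blast
  qed simp
qed

locale irr =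
  fixes J :: nat and a :: "nat \<Rightarrow> real" and s :: "nat \<Rightarrow> nat \<Rightarrow> real" and p :: "nat \<Rightarrow> nat \<Rightarrow> real"
  assumes a0: "\<And>i. i \<in> {1..J} \<Longrightarrow> 0 \<le> a i"
    and s_pos: "\<And>j k. j \<in> {1..J} \<Longrightarrow> 1 \<le> k \<Longrightarrow> 0 < s j k"
    and p0: "\<And>j i. j \<in> {1..J} \<Longrightarrow> i \<le> J \<Longrightarrow> 0 \<le> p j i"
    and a_pos: "\<And>y. y \<in> {1..J} \<Longrightarrow> 0 < p 0 y \<Longrightarrow> 0 < a y"
    and conn: "\<And>x y. x \<le> J \<Longrightarrow> y \<le> J \<Longrightarrow> (x, y) \<in> {(x, y). x \<le> J \<and> y \<le> J \<and> x \<noteq> y \<and> 0 < p x y}\<^sup>*"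
begin

abbreviation "S \<equiv> net_states J"
abbreviation "q \<equiv> net_rates J a s p"
abbreviation "R \<equiv> {(a, b). a \<in> S \<and> b \<in> S \<and> a \<noteq> b \<and> 0 < q a b}"
abbreviation "Ed \<equiv> {(x, y). x \<le> J \<and> y \<le> J \<and> x \<noteq> y \<and> 0 < p x y}"
abbreviation "Ed' \<equiv> {(x, y). x \<le> J \<and> y \<le> J \<and> x \<noteq> y \<and> 0 < p x y \<and> x \<noteq> 0}"

lemma s_nn: "j \<in> {1..J} \<Longrightarrow> 1 \<le> k \<Longrightarrow> 0 \<le> s j k"
  using s_pos by (simp add: less_imp_le)

lemma A_le: "(\<Sum>i\<in>{1..J}. if n' = n(i := n i + 1) then a i else 0) \<le> q n n'"
proof -
  have "0 \<le> (\<Sum>j\<in>{1..J}. \<Sum>i\<in>{1..J} - {j}.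
        if 0 < n j \<and> n' = n(j := n j - 1, i := n i + 1) then s j (n j) * p j i else 0)"
    using s_pos p0 by (intro sum_nonneg) (auto intro!: mult_nonneg_nonneg simp: s_nn)
  moreover have "0 \<le> (\<Sum>j\<in>{1..J}. if 0 < n j \<and> n' = n(j := n j - 1) then s j (n j) * p j 0 else 0)"
    using s_pos p0 by (intro sum_nonneg) (auto intro!: mult_nonneg_nonneg simp: s_nn)
  ultimately show ?thesis unfolding net_rates_def by linarith
qed

lemma B_le: "(\<Sum>j\<in>{1..J}. \<Sum>i\<in>{1..J} - {j}.
        if 0 < n j \<and> n' = n(j := n j - 1, i := n i + 1) then s j (n j) * p j i else 0) \<le> q n n'"
proof -
  have "0 \<le> (\<Sum>i\<in>{1..J}. if n' = n(i := n i + 1) then a i else 0)"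
    using a0 by (intro sum_nonneg) auto
  moreover have "0 \<le> (\<Sum>j\<in>{1..J}. if 0 < n j \<and> n' = n(j := n j - 1) then s j (n j) * p j 0 else 0)"
    using s_pos p0 by (intro sum_nonneg) (auto intro!: mult_nonneg_nonneg simp: s_nn)
  ultimately show ?thesis unfolding net_rates_def by linarith
qed

lemma C_le: "(\<Sum>j\<in>{1..J}. if 0 < n j \<and> n' = n(j := n j - 1) then s j (n j) * p j 0 else 0) \<le> q n n'"
proof -
  have "0 \<le> (\<Sum>i\<in>{1..J}. if n' = n(i := n i + 1) then a i else 0)"
    using a0 by (intro sum_nonneg) auto
  moreover have "0 \<le> (\<Sum>j\<in>{1..J}. \<Sum>i\<in>{1..J} - {j}.
        if 0 < n j \<and> n' = n(j := n j - 1, i := n i + 1) then s j (n j) * p j i else 0)"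
    using s_pos p0 by (intro sum_nonneg) (auto intro!: mult_nonneg_nonneg simp: s_nn)
  ultimately show ?thesis unfolding net_rates_def by linarith
qed

lemma E1:
  assumes n: "n \<in> S" and x: "x \<in> {1..J}" and nx: "0 < n x" and y: "y \<in> {1..J}" and xy: "y \<noteq> x" and pxy: "0 < p x y"
  shows "(n, n(x := n x - 1, y := n y + 1)) \<in> R"
proof -
  let ?n' = "n(x := n x - 1, y := n y + 1)"
  have t: "(\<Sum>i\<in>{1..J} - {x}. if 0 < n x \<and> ?n' = n(x := n x - 1, i := n i + 1) then s x (n x) * p x i else 0)
     \<le> (\<Sum>j\<in>{1..J}. \<Sum>i\<in>{1..J} - {j}.
        if 0 < n j \<and> ?n' = n(j := n j - 1, i := n i + 1) then s j (n j) * p j i else 0)"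
    using x s_pos p0 by (intro member_le_sum sum_nonneg) (auto intro!: mult_nonneg_nonneg simp: s_nn)
  have "s x (n x) * p x y \<le> (\<Sum>i\<in>{1..J} - {x}. if 0 < n x \<and> ?n' = n(x := n x - 1, i := n i + 1) then s x (n x) * p x i else 0)"
  proof -
    have "s x (n x) * p x y = (if 0 < n x \<and> ?n' = n(x := n x - 1, y := n y + 1) then s x (n x) * p x y else 0)"
      using nx by simp
    also have "\<dots> \<le> (\<Sum>i\<in>{1..J} - {x}. if 0 < n x \<and> ?n' = n(x := n x - 1, i := n i + 1) then s x (n x) * p x i else 0)"
      using y xy x s_pos p0 by (intro member_le_sum) (auto intro!: mult_nonneg_nonneg simp: s_nn)
    finally show ?thesis .
  qed
  moreover have "0 < s x (n x) * p x y" using s_pos[OF x, of "n x"] nx pxy by simp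
  ultimately have "0 < q n ?n'" using t B_le[of n ?n'] by linarith
  moreover have "?n' \<in> S" using n x y by (simp add: net_states_upd)
  moreover have "n \<noteq> ?n'" using xy by (auto simp: fun_eq_iff dest: fun_cong[where x=y])
  ultimately show ?thesis using n by simp
qed

lemma E2:
  assumes n: "n \<in> S" and x: "x \<in> {1..J}" and nx: "0 < n x" and px: "0 < p x 0"
  shows "(n, n(x := n x - 1)) \<in> R"
proof -
  let ?n' = "n(x := n x - 1)"
  have "s x (n x) * p x 0 = (if 0 < n x \<and> ?n' = n(x := n x - 1) then s x (n x) * p x 0 else 0)"
    using nx by simp
  also have "\<dots> \<le> (\<Sum>j\<in>{1..J}. if 0 < n j \<and> ?n' = n(j := n j - 1) then s j (n j) * p j 0 else 0)"
    using x s_pos p0 by (intro member_le_sum) (auto intro!: mult_nonneg_nonneg simp: s_nn)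
  also have "\<dots> \<le> q n ?n'" by (rule C_le)
  finally have le: "s x (n x) * p x 0 \<le> q n ?n'" .
  moreover have "0 < s x (n x) * p x 0" using s_pos[OF x, of "n x"] nx px by simp
  ultimately have "0 < q n ?n'" by linarith
  moreover have "?n' \<in> S" using n x by (simp add: net_states_upd)
  moreover have "n \<noteq> ?n'" using nx by (auto simp: fun_eq_iff dest: fun_cong[where x=x])
  ultimately show ?thesis using n by simp
qed

lemma E3:
  assumes n: "n \<in> S" and y: "y \<in> {1..J}" and ay: "0 < a y"
  shows "(n, n(y := n y + 1)) \<in> R"
proof -
  let ?n' = "n(y := n y + 1)"
  have "a y = (if ?n' = n(y := n y + 1) then a y else 0)" by simp
  also have "\<dots> \<le> (\<Sum>i\<in>{1..J}. if ?n' = n(i := n i + 1) then a i else 0)"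
    using y a0 by (intro member_le_sum) auto
  also have "\<dots> \<le> q n ?n'" by (rule A_le)
  finally have "a y \<le> q n ?n'" .
  then have "0 < q n ?n'" using ay by linarith
  moreover have "?n' \<in> S" using n y by (simp add: net_states_upd)
  moreover have "n \<noteq> ?n'" by (auto simp: fun_eq_iff dest: fun_cong[where x=y])
  ultimately show ?thesis using n by simp
qed

lemma L1: "(x, y) \<in> Ed\<^sup>* \<Longrightarrow> (x, 0) \<in> Ed'\<^sup>* \<or> (x, y) \<in> Ed'\<^sup>*"
proof (induction rule: rtrancl_induct)
  case base then show ?case by simp
next
  case (step y z)
  then show ?case
  proof (elim disjE)
    assume "(x, 0) \<in> Ed'\<^sup>*" then show ?thesis by simp
  next
    assume h: "(x, y) \<in> Ed'\<^sup>*"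
    show ?thesis
    proof (cases "y = 0")
      case True then show ?thesis using h by simp
    next
      case False
      then have "(y, z) \<in> Ed'" using step(2) by simp
      then show ?thesis using h by (meson rtrancl.rtrancl_into_rtrancl)
    qed
  qed
qed

lemma L2: "(0, y) \<in> Ed\<^sup>* \<Longrightarrow> y = 0 \<or> (\<exists>c. (0, c) \<in> Ed \<and> (c, y) \<in> Ed'\<^sup>*)"
proof (induction rule: rtrancl_induct)
  case base then show ?case by simp
next
  case (step y z)
  show ?case
  proof (cases "y = 0")
    case True
    then show ?thesis using step(2) by blast
  next
    case False
    then obtain c where c: "(0, c) \<in> Ed" "(c, y) \<in> Ed'\<^sup>*" using step(3) by blast
    have "(y, z) \<in> Ed'" using step(2) False by simp
    then show ?thesis using c by (meson rtrancl.rtrancl_into_rtrancl)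
  qed
qed

definition arr :: "(nat \<Rightarrow> nat) \<Rightarrow> nat \<Rightarrow> (nat \<Rightarrow> nat)" where
  "arr n y = (if y = 0 then n else n(y := n y + 1))"

lemma L3:
  assumes "(x, y) \<in> Ed'\<^sup>*" and x: "x \<in> {1..J}" and n: "n \<in> S" and nx: "0 < n x"
  shows "(n, arr (n(x := n x - 1)) y) \<in> R\<^sup>*"
  using assms(1)
proof (induction rule: rtrancl_induct)
  case base
  have e: "arr (n(x := n x - 1)) x = n" using x nx by (auto simp: arr_def fun_eq_iff)
  show ?case unfolding e by (rule rtrancl.rtrancl_refl)
next
  case (step z w)
  let ?d = "n(x := n x - 1)"
  have d: "?d \<in> S" using n x by (simp add: net_states_upd)
  have z: "z \<in> {1..J}" and w: "w \<le> J" and zw: "z \<noteq> w" and pzw: "0 < p z w" using step(2) by auto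
  let ?n' = "?d(z := ?d z + 1)"
  have n'eq: "arr ?d z = ?n'" using z by (simp add: arr_def)
  have n'S: "?n' \<in> S" using d z by (simp add: net_states_upd)
  have n'z: "0 < ?n' z" by simp
  have e: "(?n', arr ?d w) \<in> R"
  proof (cases "w = 0")
    case True
    have "(?n', ?n'(z := ?n' z - 1)) \<in> R" by (rule E2[OF n'S z n'z]) (use pzw True in simp)
    moreover have "?n'(z := ?n' z - 1) = arr ?d w" using True by (auto simp: arr_def fun_eq_iff)
    ultimately show ?thesis by simp
  next
    case False
    then have w1: "w \<in> {1..J}" using w by simp
    have "(?n', ?n'(z := ?n' z - 1, w := ?n' w + 1)) \<in> R"
      by (rule E1[OF n'S z n'z w1]) (use zw pzw in auto)
    moreover have "?n'(z := ?n' z - 1, w := ?n' w + 1) = arr ?d w"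
      using False zw by (auto simp: arr_def fun_eq_iff)
    ultimately show ?thesis by simp
  qed
  have "(n, ?n') \<in> R\<^sup>*" unfolding n'eq[symmetric] by (rule step(3))
  then show ?case by (rule rtrancl_into_rtrancl[OF _ e])
qed

abbreviation "z0 \<equiv> (\<lambda>_::nat. 0::nat)"

lemma nonzero_node: "n \<in> S \<Longrightarrow> n \<noteq> z0 \<Longrightarrow> \<exists>x\<in>{1..J}. 0 < n x"
proof -
  assume n: "n \<in> S" and nz: "n \<noteq> z0"
  then obtain x where x: "n x \<noteq> 0" by (auto simp: fun_eq_iff)
  then have "x \<in> {1..J}" using n unfolding net_states_def by auto
  then show ?thesis using x by auto
qed

lemma sum_dec: fixes n :: "nat \<Rightarrow> nat" shows "x \<in> {1..J} \<Longrightarrow> 0 < n x \<Longrightarrow> (\<Sum>j\<in>{1..J}. (n(x := n x - 1)) j) < (\<Sum>j\<in>{1..J}. n j)"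
proof -
  assume x: "x \<in> {1..J}" and nx: "0 < n x"
  have "(\<Sum>j\<in>{1..J}. (n(x := n x - 1)) j) = (n x - 1) + (\<Sum>j\<in>{1..J}-{x}. n j)"
    using x by (simp add: sum.remove)
  also have "\<dots> < n x + (\<Sum>j\<in>{1..J}-{x}. n j)" using nx by (cases "n x") auto
  also have "\<dots> = (\<Sum>j\<in>{1..J}. n j)" using x by (simp add: sum.remove)
  finally show ?thesis .
qed

lemma to_zero: "n \<in> S \<Longrightarrow> (n, z0) \<in> R\<^sup>*"
proof (induction "\<Sum>j\<in>{1..J}. n j" arbitrary: n rule: less_induct)
  case less
  show ?case
  proof (cases "n = z0")
    case True then show ?thesis by simp
  next
    case False
    then obtain x where x: "x \<in> {1..J}" "0 < n x" using nonzero_node less.prems by blast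
    have "(x, 0) \<in> Ed\<^sup>*" using conn[of x 0] x by simp
    then have "(x, 0) \<in> Ed'\<^sup>*" using L1 by blast
    then have "(n, arr (n(x := n x - 1)) 0) \<in> R\<^sup>*" by (rule L3[OF _ x(1) less.prems x(2)])
    then have 1: "(n, n(x := n x - 1)) \<in> R\<^sup>*" by (simp add: arr_def)
    have "(n(x := n x - 1), z0) \<in> R\<^sup>*"
      by (rule less.hyps[OF sum_dec[of x n, OF x]]) (rule net_states_upd[OF less.prems x(1)])
    then show ?thesis using 1 by (rule rtrancl_trans[rotated])
  qed
qed

lemma from_zero: "n \<in> S \<Longrightarrow> (z0, n) \<in> R\<^sup>*"
proof (induction "\<Sum>j\<in>{1..J}. n j" arbitrary: n rule: less_induct)
  case less
  show ?case
  proof (cases "n = z0")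
    case True then show ?thesis by simp
  next
    case False
    then obtain x where x: "x \<in> {1..J}" "0 < n x" using nonzero_node less.prems by blast
    let ?n0 = "n(x := n x - 1)"
    have n0S: "?n0 \<in> S" using less.prems x(1) by (simp add: net_states_upd)
    have 1: "(z0, ?n0) \<in> R\<^sup>*" by (rule less.hyps[OF sum_dec[of x n, OF x] n0S])
    have "(0, x) \<in> Ed\<^sup>*" using conn[of 0 x] x by simp
    then have "x = 0 \<or> (\<exists>c. (0, c) \<in> Ed \<and> (c, x) \<in> Ed'\<^sup>*)" by (rule L2)
    then obtain c where c: "(0, c) \<in> Ed" "(c, x) \<in> Ed'\<^sup>*" using x(1) by auto
    have c1: "c \<in> {1..J}" and pc: "0 < p 0 c" using c(1) by auto
    let ?n1 = "?n0(c := ?n0 c + 1)"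
    have 2: "(?n0, ?n1) \<in> R" by (rule E3[OF n0S c1 a_pos[OF c1 pc]])
    have n1S: "?n1 \<in> S" using n0S c1 by (simp add: net_states_upd)
    have "(?n1, arr (?n1(c := ?n1 c - 1)) x) \<in> R\<^sup>*" by (rule L3[OF c(2) c1 n1S]) simp
    moreover have "arr (?n1(c := ?n1 c - 1)) x = n"
    proof -
      have "?n1(c := ?n1 c - 1) = ?n0" by (auto simp: fun_eq_iff)
      moreover have "arr ?n0 x = n" using x by (auto simp: arr_def)
      ultimately show ?thesis by simp
    qed
    ultimately have 3: "(?n1, n) \<in> R\<^sup>*" by simp
    have "(z0, ?n1) \<in> R\<^sup>*" by (rule rtrancl_into_rtrancl[OF 1 2])
    then show ?thesis by (rule rtrancl_trans[OF _ 3])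
  qed
qed

lemma irreducible: "irreducible_ctmc S q"
  unfolding irreducible_ctmc_def
proof (intro ballI)
  fix m n assume "m \<in> S" "n \<in> S"
  then show "(m, n) \<in> R\<^sup>*" using rtrancl_trans[OF to_zero from_zero] by blast
qed

end

lemma summable_sum_fin:
  fixes f :: "'i \<Rightarrow> 'a \<Rightarrow> real"
  assumes "finite I" "\<And>t. t\<in>I \<Longrightarrow> f t summable_on A"
  shows "(\<lambda>x. \<Sum>t\<in>I. f t x) summable_on A"
  using assms
proof (induction I rule: finite_induct)
  case empty then show ?case by simp
next
  case (insert t I)
  have "(\<lambda>x. f t x + (\<Sum>t\<in>I. f t x)) summable_on A"
    by (intro summable_on_add) (use insert in auto)
  then show ?case using insert by simp
qed

theorem theorem3p2:
  fixes J :: nat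
    and lam :: "nat \<Rightarrow> real"          \<comment> \<open>external arrival rates lambda_j, j = 1..J\<close>
    and \<mu> :: "nat \<Rightarrow> nat \<Rightarrow> real"       \<comment> \<open>service intensities mu_j(k)\<close>
    and r :: "nat \<Rightarrow> nat \<Rightarrow> real"       \<comment> \<open>extended routing matrix on {0..J}\<close>
    and \<eta> :: "nat \<Rightarrow> real"              \<comment> \<open>extended traffic solution\<close>
    and \<gamma> :: "nat \<Rightarrow> real"
  defines "\<Lambda> \<equiv> (\<Sum>j\<in>{1..J}. lam j)"
  assumes lam_nonneg: "\<forall>j\<in>{1..J}. 0 \<le> lam j"
    and lam_pos: "0 < \<Lambda>"
    and mu_pos: "\<forall>j\<in>{1..J}. \<forall>k\<ge>1. 0 < \<mu> j k"
    and r_nonneg: "\<forall>i\<le>J. \<forall>j\<le>J. 0 \<le> r i j"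
    and r_stoch: "\<forall>i\<le>J. (\<Sum>j\<le>J. r i j) = 1"
    and r_irred: "\<forall>i\<le>J. \<forall>j\<le>J. (i, j) \<in> {(a, b). a \<le> J \<and> b \<le> J \<and> 0 < r a b}\<^sup>+"
    and r_0: "\<forall>j\<in>{1..J}. r 0 j = lam j / \<Lambda>"
    and r_00: "r 0 0 = 0"
    and eta_0: "\<eta> 0 = \<Lambda>"
    and eta_traffic: "\<forall>j\<le>J. \<eta> j = (\<Sum>i\<le>J. \<eta> i * r i j)"
    and ergodic: "ergodic_ctmc (net_states J) (net_rates J lam \<mu> r)"
    and C_finite: "\<forall>j\<in>{1..J}. summable (\<lambda>m. \<Prod>k\<in>{1..m}. \<eta> j / \<mu> j k)"
    and gamma_range: "\<forall>j\<in>{1..J}. 0 \<le> \<gamma> j \<and> \<gamma> j \<le> 1"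
  defines "\<xi> \<equiv> (\<lambda>n. \<Prod>j\<in>{1..J}. node_factor \<eta> \<mu> j (n j))"
    and "B \<equiv> {j\<in>{1..J}. \<gamma> j = 0}"
    and "W \<equiv> {1..J} - {j\<in>{1..J}. \<gamma> j = 0}"
    and "q\<gamma> \<equiv> net_rates J (\<lambda>i. \<Lambda> * skip_matrix J r (\<lambda>j. if j = 0 then 1 else \<gamma> j) 0 i) (\<lambda>j k. \<gamma> j * \<mu> j k) (skip_matrix J r (\<lambda>j. if j = 0 then 1 else \<gamma> j))"
    and "SB \<equiv> {b :: nat \<Rightarrow> nat. \<forall>j. j \<notin> {j\<in>{1..J}. \<gamma> j = 0} \<longrightarrow> b j = 0}"
    and "sub \<equiv> (\<lambda>b. {n\<in>net_states J. \<forall>j\<in>{j\<in>{1..J}. \<gamma> j = 0}. n j = b j})"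
  shows "stationary_dist (net_states J) q\<gamma> \<xi>
    \<and> (B = {} \<longrightarrow> ergodic_ctmc (net_states J) q\<gamma>)
    \<and> (B \<noteq> {} \<longrightarrow>
         \<not> irreducible_ctmc (net_states J) q\<gamma>
       \<and> (\<forall>b\<in>SB. closed_subset (net_states J) q\<gamma> (sub b))
       \<and> (\<Union>b\<in>SB. sub b) = net_states J
       \<and> (\<forall>b\<in>SB. \<forall>b'\<in>SB. b \<noteq> b' \<longrightarrow> sub b \<inter> sub b' = {})
       \<and> infinite (sub ` SB)
       \<and> (\<forall>\<phi> :: (nat \<Rightarrow> nat) \<Rightarrow> real.
            (\<forall>b\<in>SB. 0 \<le> \<phi> b) \<and> (\<phi> has_sum 1) SB \<longrightarrow>
            stationary_dist (net_states J) q\<gamma>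
              (\<lambda>n. (\<Prod>j\<in>W. node_factor \<eta> \<mu> j (n j)) * \<phi> (\<lambda>j. if j \<in> B then n j else 0))))"

proof -
  let ?\<alpha> = "\<lambda>j::nat. if j = 0 then 1 else \<gamma> j"
  let ?X = "skip_matrix J r ?\<alpha>"
  let ?a = "\<lambda>i. \<Lambda> * ?X 0 i"
  let ?s = "\<lambda>j k. \<gamma> j * \<mu> j k"
  let ?v = "\<lambda>j. \<eta> j * \<gamma> j"
  let ?S = "net_states J"
  have q_def: "q\<gamma> = net_rates J ?a ?s ?X" unfolding q\<gamma>_def by simp
  interpret skp J r ?\<alpha>
  proof
    show "\<And>i j. i \<le> J \<Longrightarrow> j \<le> J \<Longrightarrow> 0 \<le> r i j" using r_nonneg by blast
    show "\<And>i. i \<le> J \<Longrightarrow> (\<Sum>j\<le>J. r i j) = 1" using r_stoch by blast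
    show "\<And>i j. i \<le> J \<Longrightarrow> j \<le> J \<Longrightarrow> (i, j) \<in> {(a, b). a \<le> J \<and> b \<le> J \<and> 0 < r a b}\<^sup>+"
      using r_irred by blast
    show "\<And>j. j \<le> J \<Longrightarrow> 0 \<le> ?\<alpha> j \<and> ?\<alpha> j \<le> 1" using gamma_range by auto
    show "?\<alpha> 0 = 1" by simp
  qed
  have eta_pos: "\<And>j. j \<le> J \<Longrightarrow> 0 < \<eta> j"
    by (rule eta_pos) (use eta_traffic eta_0 lam_pos in auto)
  have nfl: "nfl \<eta> \<mu> j" if "j \<in> {1..J}" for j
    by unfold_locales (use that eta_pos mu_pos C_finite in auto)
  have nf_pos: "\<And>j m. j \<in> {1..J} \<Longrightarrow> 0 < node_factor \<eta> \<mu> j m"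
    using nfl nfl.nf_pos by blast
  have nf_sum: "\<And>j. j \<in> {1..J} \<Longrightarrow> (node_factor \<eta> \<mu> j has_sum 1) UNIV"
    using nfl nfl.nf_has_sum by blast
  have nf_rec: "\<And>j m. j \<in> {1..J} \<Longrightarrow> 0 < m \<Longrightarrow> node_factor \<eta> \<mu> j m * \<mu> j m = node_factor \<eta> \<mu> j (m - 1) * \<eta> j"
    using nfl nfl.nf_rec by blast
  have Xnn: "\<And>i j. i \<le> J \<Longrightarrow> j \<le> J \<Longrightarrow> 0 \<le> ?X i j" by (rule sk_nonneg)
  have traffic: "?v i = ?a i + (\<Sum>j\<in>{1..J}. ?v j * ?X j i)" if i: "i \<in> {1..J}" for i
  proof -
    have "(\<Sum>j\<le>J. \<eta> j * ?\<alpha> j * ?X j i) = \<eta> i * ?\<alpha> i"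
      by (rule sk_traffic) (use eta_traffic i in auto)
    moreover have "{..J} = insert 0 {1..J}" by auto
    ultimately have "\<eta> 0 * ?X 0 i + (\<Sum>j\<in>{1..J}. \<eta> j * ?\<alpha> j * ?X j i) = \<eta> i * ?\<alpha> i" by simp
    moreover have "(\<Sum>j\<in>{1..J}. \<eta> j * ?\<alpha> j * ?X j i) = (\<Sum>j\<in>{1..J}. ?v j * ?X j i)"
      by (intro sum.cong refl) auto
    ultimately show ?thesis using i eta_0 by simp
  qed
  have rows: "\<And>j. j \<in> {1..J} \<Longrightarrow> (\<Sum>i\<le>J. ?X j i) = 1" by (rule sk_rowsum) auto
  have \<xi>_R: "\<xi> n * ?s j (n j) = \<xi> (n(j := n j - 1)) * ?v j"
    if "n \<in> ?S" "j \<in> {1..J}" "0 < n j" for n j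
  proof -
    have e1: "\<xi> n = node_factor \<eta> \<mu> j (n j) * (\<Prod>k\<in>{1..J}-{j}. node_factor \<eta> \<mu> k (n k))"
      unfolding \<xi>_def using that(2) by (simp add: prod.remove)
    have e2: "\<xi> (n(j := n j - 1)) = node_factor \<eta> \<mu> j (n j - 1) * (\<Prod>k\<in>{1..J}-{j}. node_factor \<eta> \<mu> k (n k))"
      unfolding \<xi>_def using that(2) by (simp add: prod.remove)
    show ?thesis unfolding e1 e2 using nf_rec[OF that(2,3)]
      by (simp add: algebra_simps)
  qed
  have \<xi>_nn: "\<And>n. 0 \<le> \<xi> n" unfolding \<xi>_def using nf_pos by (intro prod_nonneg) (auto intro: less_imp_le)
  have \<xi>_pos: "\<And>n. 0 < \<xi> n" unfolding \<xi>_def using nf_pos by (intro prod_pos) auto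
  have \<xi>_sum: "(\<xi> has_sum 1) ?S"
  proof -
    have "((\<lambda>n. (\<Prod>j\<in>{1..J}. node_factor \<eta> \<mu> j (n j)) * (\<lambda>_. 1::real) (\<lambda>j. if j \<in> {} then n j else 0)) has_sum 1)
           {n. \<forall>j. j \<notin> {1..J} \<union> {} \<longrightarrow> n j = 0}"
    proof (rule prod_has_sum)
      have e: "{b::nat\<Rightarrow>nat. \<forall>j. j \<notin> {} \<longrightarrow> b j = 0} = {\<lambda>_. 0}" by (auto simp: fun_eq_iff)
      moreover have "((\<lambda>_. 1::real) has_sum 1) {\<lambda>_::nat. 0::nat}" by (simp add: has_sum_finite_iff)
      ultimately show "((\<lambda>_. 1::real) has_sum 1) {b::nat\<Rightarrow>nat. \<forall>j. j \<notin> {} \<longrightarrow> b j = 0}"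
        by (simp only:)
    qed (use nf_sum nf_pos in \<open>auto intro: less_imp_le\<close>)
    then show ?thesis unfolding \<xi>_def net_states_def by simp
  qed
  have stat\<xi>: "stationary_dist ?S q\<gamma> \<xi>"
    unfolding q_def
    by (rule net_stationary[where v="?v"]) (use \<xi>_nn \<xi>_sum \<xi>_R traffic rows in auto)
  have WB: "W \<inter> B = {}" "W \<union> B = {1..J}" "finite W" unfolding W_def B_def by auto
  have SB_eq: "SB = {b. \<forall>j. j \<notin> B \<longrightarrow> b j = 0}" unfolding SB_def B_def by simp
  have proj_SB: "(\<lambda>j. if j \<in> B then n j else 0) \<in> SB" for n :: "nat \<Rightarrow> nat" unfolding SB_eq by auto
  have stat\<phi>: "stationary_dist ?S q\<gamma> (\<lambda>n. (\<Prod>j\<in>W. node_factor \<eta> \<mu> j (n j)) * \<phi> (\<lambda>j. if j \<in> B then n j else 0))"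
    if \<phi>0: "\<forall>b\<in>SB. 0 \<le> \<phi> b" and \<phi>1: "(\<phi> has_sum 1) SB" for \<phi> :: "(nat \<Rightarrow> nat) \<Rightarrow> real"
  proof -
    let ?\<pi> = "\<lambda>n. (\<Prod>j\<in>W. node_factor \<eta> \<mu> j (n j)) * \<phi> (\<lambda>j. if j \<in> B then n j else 0)"
    have nn: "0 \<le> ?\<pi> n" for n
      using \<phi>0 proj_SB[of n] nf_pos WB unfolding W_def
      by (intro mult_nonneg_nonneg prod_nonneg) (auto intro: less_imp_le)
    have hs: "(?\<pi> has_sum 1) {n. \<forall>j. j \<notin> W \<union> B \<longrightarrow> n j = 0}"
    proof (rule prod_has_sum)
      show "(\<phi> has_sum 1) {b. \<forall>j. j \<notin> B \<longrightarrow> b j = 0}" using \<phi>1 unfolding SB_eq .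
      show "\<And>b. b \<in> {b. \<forall>j. j \<notin> B \<longrightarrow> b j = 0} \<Longrightarrow> 0 \<le> \<phi> b" using \<phi>0 unfolding SB_eq by blast
    qed (use WB nf_sum nf_pos in \<open>auto simp: W_def intro: less_imp_le\<close>)
    have hs': "(?\<pi> has_sum 1) ?S" using hs unfolding WB(2) net_states_def .
    have R: "?\<pi> n * ?s j (n j) = ?\<pi> (n(j := n j - 1)) * ?v j"
      if "n \<in> ?S" "j \<in> {1..J}" "0 < n j" for n j
    proof (cases "\<gamma> j = 0")
      case True then show ?thesis by simp
    next
      case False
      then have jW: "j \<in> W" "j \<notin> B" using that(2) unfolding W_def B_def by auto
      have pr: "(\<lambda>i. if i \<in> B then (n(j := n j - 1)) i else 0) = (\<lambda>i. if i \<in> B then n i else 0)"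
        using jW by (auto simp: fun_eq_iff)
      have e1: "(\<Prod>k\<in>W. node_factor \<eta> \<mu> k (n k)) = node_factor \<eta> \<mu> j (n j) * (\<Prod>k\<in>W-{j}. node_factor \<eta> \<mu> k (n k))"
        using jW WB by (simp add: prod.remove)
      have e2: "(\<Prod>k\<in>W. node_factor \<eta> \<mu> k ((n(j := n j - 1)) k)) = node_factor \<eta> \<mu> j (n j - 1) * (\<Prod>k\<in>W-{j}. node_factor \<eta> \<mu> k (n k))"
        using jW WB by (simp add: prod.remove)
      show ?thesis unfolding e1 e2 pr using nf_rec[OF that(2,3)]
        by (simp add: algebra_simps)
    qed
    show ?thesis unfolding q_def
      by (rule net_stationary[where v="?v"]) (use nn hs' R traffic rows in auto)
  qed
  have subB: "sub b = {n \<in> ?S. \<forall>j\<in>B. n j = b j}" for b unfolding sub_def B_def by simp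
  have Bsub: "B \<subseteq> {1..J}" unfolding B_def by auto
  have Xcol0: "?X i j = 0" if "j \<in> B" for i j
    by (rule sk_zero_col) (use that in \<open>auto simp: B_def\<close>)
  have closed: "closed_subset ?S q\<gamma> (sub b)" for b
    unfolding closed_subset_def
  proof (intro conjI ballI)
    show "sub b \<subseteq> ?S" unfolding subB by auto
    fix m n assume m: "m \<in> sub b" and n: "n \<in> ?S - sub b"
    obtain j where j: "j \<in> B" "n j \<noteq> m j" using m n unfolding subB by auto
    have gj: "\<gamma> j = 0" using j(1) unfolding B_def by auto
    show "q\<gamma> m n = 0" unfolding q_def
    proof (rule net_rates_zero)
      fix i assume i: "i \<in> {1..J}"
      show "n \<noteq> m(i := m i + 1) \<or> ?a i = 0"
      proof (cases "i = j")
        case True then show ?thesis using Xcol0[OF j(1)] by simp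
      next
        case False then show ?thesis using j(2) by auto
      qed
    next
      fix j' i assume j': "j' \<in> {1..J}" and i: "i \<in> {1..J} - {j'}" and mj: "0 < m j'"
      show "n \<noteq> m(j' := m j' - 1, i := m i + 1) \<or> ?s j' (m j') * ?X j' i = 0"
      proof (cases "j' = j")
        case True then show ?thesis using gj by simp
      next
        case False
        show ?thesis
        proof (cases "i = j")
          case True then show ?thesis using Xcol0[OF j(1)] by simp
        next
          case False2: False
          then show ?thesis using j(2) False by auto
        qed
      qed
    next
      fix j' assume j': "j' \<in> {1..J}" and mj: "0 < m j'"
      show "n \<noteq> m(j' := m j' - 1) \<or> ?s j' (m j') * ?X j' 0 = 0"
      proof (cases "j' = j")
        case True then show ?thesis using gj by simp
      next
        case False then show ?thesis using j(2) by auto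
      qed
    qed
  qed
  have bS: "b \<in> ?S" if "b \<in> SB" for b using that Bsub unfolding SB_eq net_states_def by auto
  have unionS: "(\<Union>b\<in>SB. sub b) = ?S"
  proof
    show "(\<Union>b\<in>SB. sub b) \<subseteq> ?S" unfolding subB by auto
    show "?S \<subseteq> (\<Union>b\<in>SB. sub b)"
    proof
      fix n assume n: "n \<in> ?S"
      then have "n \<in> sub (\<lambda>j. if j \<in> B then n j else 0)" unfolding subB by auto
      then show "n \<in> (\<Union>b\<in>SB. sub b)" using proj_SB[of n] by blast
    qed
  qed
  have disj: "\<forall>b\<in>SB. \<forall>b'\<in>SB. b \<noteq> b' \<longrightarrow> sub b \<inter> sub b' = {}"
  proof (intro ballI impI)
    fix b b' assume b: "b \<in> SB" and b': "b' \<in> SB" and ne: "b \<noteq> b'"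
    then obtain j where j: "b j \<noteq> b' j" by (auto simp: fun_eq_iff)
    have jB: "j \<in> B"
    proof (rule ccontr)
      assume "j \<notin> B"
      then have "b j = 0" "b' j = 0" using b b' unfolding SB_eq by auto
      then show False using j by simp
    qed
    show "sub b \<inter> sub b' = {}" using j jB unfolding subB by auto
  qed
  have inj: "inj_on sub SB"
  proof (rule inj_onI)
    fix b b' assume b: "b \<in> SB" and b': "b' \<in> SB" and e: "sub b = sub b'"
    have "b \<in> sub b" using bS[OF b] unfolding subB by auto
    then have "b \<in> sub b'" using e by simp
    then have "\<forall>j\<in>B. b j = b' j" unfolding subB by auto
    then show "b = b'" using b b' unfolding SB_eq by (auto simp: fun_eq_iff)
  qed
  have infSB: "infinite SB" if Bne: "B \<noteq> {}"
  proof
    assume fin: "finite SB"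
    obtain j0 where j0: "j0 \<in> B" using Bne by auto
    let ?f = "\<lambda>t::nat. (\<lambda>j::nat. if j = j0 then t else 0)"
    have "inj ?f"
    proof (rule injI)
      fix x y assume "?f x = ?f y"
      then show "x = y" by (metis (mono_tags))
    qed
    moreover have "range ?f \<subseteq> SB" unfolding SB_eq using j0 by auto
    then have "finite (range ?f)" using fin finite_subset by blast
    ultimately have "finite (UNIV :: nat set)" using finite_imageD by blast
    then show False by simp
  qed
  have notirr: "\<not> irreducible_ctmc ?S q\<gamma>" if Bne: "B \<noteq> {}"
  proof
    assume irr: "irreducible_ctmc ?S q\<gamma>"
    obtain j0 where j0: "j0 \<in> B" using Bne by auto
    let ?z = "\<lambda>_::nat. 0::nat"
    let ?e = "?z(j0 := 1)"
    have zS: "?z \<in> ?S" unfolding net_states_def by simp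
    have eS: "?e \<in> ?S" using j0 Bsub unfolding net_states_def by auto
    let ?R = "{(a, b). a \<in> ?S \<and> b \<in> ?S \<and> a \<noteq> b \<and> 0 < q\<gamma> a b}"
    have "(?z, ?e) \<in> ?R\<^sup>*" using irr zS eS unfolding irreducible_ctmc_def by blast
    moreover have "y \<in> sub ?z" if "(x, y) \<in> ?R\<^sup>*" "x \<in> sub ?z" for x y
      using that
    proof (induction rule: rtrancl_induct)
      case base then show ?case .
    next
      case (step y w)
      then have yw: "y \<in> sub ?z" "w \<in> ?S" "0 < q\<gamma> y w" by auto
      show ?case
      proof (rule ccontr)
        assume "w \<notin> sub ?z"
        then have "q\<gamma> y w = 0" using closed[of ?z] yw unfolding closed_subset_def by blast
        then show False using yw by simp
      qed
    qed
    moreover have "?z \<in> sub ?z" using zS unfolding subB by auto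
    ultimately have "?e \<in> sub ?z" by blast
    then show False using j0 unfolding subB by auto
  qed
  have erg: "ergodic_ctmc ?S q\<gamma>" if B0: "B = {}"
  proof -
    have gpos: "0 < \<gamma> j" if "j \<in> {1..J}" for j
      using B0 gamma_range that unfolding B_def by force
    have apos: "0 < ?\<alpha> j" if "j \<le> J" for j using gpos that by auto
    have Xpos: "0 < ?X i j" if "i \<le> J" "j \<le> J" "0 < r i j" for i j
    proof -
      have "0 < r i j * ?\<alpha> j" using that apos[OF that(2)] by (intro mult_pos_pos)
      also have "\<dots> \<le> ?X i j" by (rule sk_ge[OF that(1,2)])
      finally show ?thesis .
    qed
    have s_pos: "0 < ?s j k" if "j \<in> {1..J}" "1 \<le> k" for j k
      using gpos[OF that(1)] mu_pos that by simp
    interpret I: irr J ?a ?s ?X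
    proof
      show "\<And>i. i \<in> {1..J} \<Longrightarrow> 0 \<le> ?a i" using lam_pos Xnn by simp
      show "\<And>j k. j \<in> {1..J} \<Longrightarrow> 1 \<le> k \<Longrightarrow> 0 < ?s j k" by (rule s_pos)
      show "\<And>j i. j \<in> {1..J} \<Longrightarrow> i \<le> J \<Longrightarrow> 0 \<le> ?X j i" using Xnn by simp
      show "\<And>y. y \<in> {1..J} \<Longrightarrow> 0 < ?X 0 y \<Longrightarrow> 0 < ?a y" using lam_pos by simp
      fix x y assume x: "x \<le> J" and y: "y \<le> J"
      let ?Ed = "{(x, y). x \<le> J \<and> y \<le> J \<and> x \<noteq> y \<and> 0 < ?X x y}"
      have st: "(u, w) \<in> ?Ed\<^sup>*" if "(u, w) \<in> Rr" for u w
      proof (cases "u = w")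
        case True then show ?thesis by simp
      next
        case False
        then have "(u, w) \<in> ?Ed" using that Xpos by auto
        then show ?thesis by (rule r_into_rtrancl)
      qed
      have "(x, y) \<in> Rr\<^sup>+" by (rule r_irred[OF x y])
      then show "(x, y) \<in> ?Ed\<^sup>*"
      proof (induction rule: trancl_induct)
        case (base w) then show ?case by (rule st)
      next
        case (step w v) then show ?case using st[of w v] by (meson rtrancl_trans)
      qed
    qed
    have irred: "irreducible_ctmc ?S q\<gamma>" unfolding q_def by (rule I.irreducible)
    have suma: "0 < (\<Sum>i\<in>{1..J}. ?a i)"
    proof -
      have "{..J} = insert 0 {1..J}" by auto
      then have "(\<Sum>j\<in>{1..J}. r 0 j) = 1" using r_stoch[of 0] r_00 by simp
      then have "\<exists>y\<in>{1..J}. 0 < r 0 y"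
      proof -
        assume s1: "(\<Sum>j\<in>{1..J}. r 0 j) = 1"
        show ?thesis
        proof (rule ccontr)
          assume h: "\<not> (\<exists>y\<in>{1..J}. 0 < r 0 y)"
          have "(\<Sum>j\<in>{1..J}. r 0 j) \<le> 0"
          proof (rule sum_nonpos)
            fix x assume "x \<in> {1..J}"
            then show "r 0 x \<le> 0" using h by (meson not_le)
          qed
          then show False using s1 by simp
        qed
      qed
      then obtain y where y: "y \<in> {1..J}" "0 < r 0 y" by blast
      have "0 < ?a y" using Xpos[of 0 y] y lam_pos by simp
      also have "\<dots> \<le> (\<Sum>i\<in>{1..J}. ?a i)"
        using y lam_pos Xnn by (intro member_le_sum) auto
      finally show ?thesis .
    qed
    have OUT_pos: "0 < OUT J ?a ?s ?X m" for m
    proof -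
      have "0 \<le> (\<Sum>j\<in>{1..J}. \<Sum>i\<in>{1..J}-{j}. if 0 < m j then ?s j (m j) * ?X j i else 0)"
        using s_pos Xnn by (intro sum_nonneg) (auto intro!: mult_nonneg_nonneg less_imp_le[of 0 "?s _ _"])
      moreover have "0 \<le> (\<Sum>j\<in>{1..J}. if 0 < m j then ?s j (m j) * ?X j 0 else 0)"
        using s_pos Xnn by (intro sum_nonneg) (auto intro!: mult_nonneg_nonneg less_imp_le[of 0 "?s _ _"])
      ultimately show ?thesis using suma unfolding OUT_def by linarith
    qed
    define g where "g j m = (if 0 < m j then \<xi> (m(j := m j - 1)) else 0)" for j and m :: "nat \<Rightarrow> nat"
    have gsum: "g j summable_on ?S" if "j \<in> {1..J}" for j
      using shift_has_sum[OF \<xi>_sum that] unfolding g_def[abs_def] by (rule has_sum_imp_summable)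
    have tm: "\<xi> m * (if 0 < m j then ?s j (m j) * c else 0) = g j m * (?v j * c)"
      if "m \<in> ?S" "j \<in> {1..J}" for m j c
    proof (cases "0 < m j")
      case True
      have "\<xi> m * ?s j (m j) = \<xi> (m(j := m j - 1)) * ?v j" by (rule \<xi>_R[OF that True])
      then show ?thesis using True unfolding g_def by (simp add: mult.assoc[symmetric])
    qed (simp add: g_def)
    have pw: "\<xi> m * out_rate ?S q\<gamma> m = \<xi> m * (\<Sum>i\<in>{1..J}. ?a i)
       + (\<Sum>j\<in>{1..J}. \<Sum>i\<in>{1..J}-{j}. g j m * (?v j * ?X j i)) + (\<Sum>j\<in>{1..J}. g j m * (?v j * ?X j 0))"
      if m: "m \<in> ?S" for m
    proof -
      have "\<xi> m * out_rate ?S q\<gamma> m = \<xi> m * OUT J ?a ?s ?X m" unfolding q_def out_rate_net[OF m] ..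
      also have "\<dots> = \<xi> m * (\<Sum>i\<in>{1..J}. ?a i)
       + (\<Sum>j\<in>{1..J}. \<Sum>i\<in>{1..J}-{j}. \<xi> m * (if 0 < m j then ?s j (m j) * ?X j i else 0))
       + (\<Sum>j\<in>{1..J}. \<xi> m * (if 0 < m j then ?s j (m j) * ?X j 0 else 0))"
        unfolding OUT_def distrib_left sum_distrib_left ..
      also have "\<dots> = \<xi> m * (\<Sum>i\<in>{1..J}. ?a i)
       + (\<Sum>j\<in>{1..J}. \<Sum>i\<in>{1..J}-{j}. g j m * (?v j * ?X j i)) + (\<Sum>j\<in>{1..J}. g j m * (?v j * ?X j 0))"
        using tm[OF m] by simp
      finally show ?thesis .
    qed
    have nu_summ: "(\<lambda>m. \<xi> m * out_rate ?S q\<gamma> m) summable_on ?S"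
    proof -
      have "(\<lambda>m. \<xi> m * (\<Sum>i\<in>{1..J}. ?a i)
       + (\<Sum>j\<in>{1..J}. \<Sum>i\<in>{1..J}-{j}. g j m * (?v j * ?X j i)) + (\<Sum>j\<in>{1..J}. g j m * (?v j * ?X j 0))) summable_on ?S"
        using \<xi>_sum gsum
        by (intro summable_on_add summable_sum_fin summable_on_cmult_left finite_Diff finite_atLeastAtMost)
           (auto intro: has_sum_imp_summable)
      then show ?thesis by (rule summable_on_cong[THEN iffD1, rotated]) (use pw in simp)
    qed
    interpret M: mc ?S q\<gamma> \<xi>
    proof
      show "\<And>m n. m \<in> ?S \<Longrightarrow> n \<in> ?S \<Longrightarrow> 0 \<le> q\<gamma> m n"
      proof -
        fix m n
        have s_nn: "\<And>j k. j \<in> {1..J} \<Longrightarrow> 1 \<le> k \<Longrightarrow> 0 \<le> ?s j k" using s_pos by (simp add: less_imp_le)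
        have a_nn: "\<And>i. i \<in> {1..J} \<Longrightarrow> 0 \<le> ?a i" using lam_pos Xnn by simp
        show "0 \<le> q\<gamma> m n" unfolding q_def by (rule net_rates_nonneg[OF a_nn s_nn Xnn]) auto
      qed
      show "\<And>m. m \<in> ?S \<Longrightarrow> q\<gamma> m summable_on ?S - {m}"
        unfolding q_def using out_has_sum by (blast intro: has_sum_imp_summable)
      show "\<And>m. m \<in> ?S \<Longrightarrow> 0 < out_rate ?S q\<gamma> m"
        unfolding q_def using out_rate_net OUT_pos by simp
      show "\<And>j. j \<in> ?S \<Longrightarrow> finite {l \<in> ?S. q\<gamma> l j \<noteq> 0}"
        by (rule finite_subset[OF _ net_pred_fin[of J ?a ?s ?X]]) (auto simp: q_def)
      show "stationary_dist ?S q\<gamma> \<xi>" by (rule stat\<xi>)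
      show "\<And>m. m \<in> ?S \<Longrightarrow> 0 < \<xi> m" by (rule \<xi>_pos)
      show "(\<lambda>m. \<xi> m * out_rate ?S q\<gamma> m) summable_on ?S" by (rule nu_summ)
    qed
    show ?thesis unfolding ergodic_ctmc_def using irred M.pos_rec by blast
  qed
  have infsub: "infinite (sub ` SB)" if "B \<noteq> {}"
    using infSB[OF that] finite_imageD[OF _ inj] by blast
  show ?thesis
  proof (intro conjI impI allI)
    show "stationary_dist ?S q\<gamma> \<xi>" by (rule stat\<xi>)
    show "ergodic_ctmc ?S q\<gamma>" if "B = {}" using erg[OF that] .
    show "\<not> irreducible_ctmc ?S q\<gamma>" if "B \<noteq> {}" using notirr[OF that] .
    show "\<forall>b\<in>SB. closed_subset ?S q\<gamma> (sub b)" using closed by blast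
    show "(\<Union>b\<in>SB. sub b) = ?S" by (rule unionS)
    show "\<forall>b\<in>SB. \<forall>b'\<in>SB. b \<noteq> b' \<longrightarrow> sub b \<inter> sub b' = {}" by (rule disj)
    show "infinite (sub ` SB)" if "B \<noteq> {}" using infsub[OF that] .
    fix \<phi> :: "(nat \<Rightarrow> nat) \<Rightarrow> real"
    assume h: "(\<forall>b\<in>SB. 0 \<le> \<phi> b) \<and> (\<phi> has_sum 1) SB"
    show "stationary_dist ?S q\<gamma> (\<lambda>n. (\<Prod>j\<in>W. node_factor \<eta> \<mu> j (n j)) * \<phi> (\<lambda>j. if j \<in> B then n j else 0))"
      using stat\<phi> h by blast
  qed
qed

end
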